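(* Let $N\ge1$, $\lambda_1,\dots,\lambda_N$ distinct, $\mu_1,\dots,\mu_N$ nonzero constants, $A=\mathrm{diag}(\lambda_j)$, $B=\mathrm{diag}(\mu_j)$. Suppose $P_i,Q_i$ ($i=1,2,3$) satisfy the nonlinearized spatial system (defined below). Then for all $m\ge0$: \[\tilde a_{m+1}=\sum_{i=0}^m I_i(\langle A^{m-i}P_1,BQ_1\rangle-\langle A^{m-i}P_3,BQ_3\rangle)-I_{m+1},\] \[\tilde b_{m+1}=\sqrt2\sum_{i=0}^m I_i(\langle A^{m-i}P_1,BQ_2\rangle+\langle A^{m-i}P_2,BQ_3\rangle),\] \[\tilde c_{m+1}=\sqrt2\sum_{i=0}^m I_i(\langle A^{m-i}P_2,BQ_1\rangle+\langle A^{m-i}P_3,BQ_2\rangle),\] where $I_0=1$ and \[I_m=\sum_{n=1}^m d_n\sum_{\substack{i_1+\cdots+i_n=m\\ i_1,\dots,i_n\ge1}}F_{i_1}\cdots F_{i_n},\quad m\ge1,\] with constants $d_n$ determined by $d_1=-\frac18$, $d_2=\frac{3}{128}$ and \[d_n=-\frac12\sum_{i=1}^{n-1}d_id_{n-i}-\frac14 d_{n-1}-\frac18\sum_{i=1}^{n-2}d_id_{n-i-1},\quad n\ge3.\]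
   Context: Potential $u=(q,r)^T$; $U(u,\lambda)=\begin{pmatrix}-2\lambda&\sqrt2 q&0\\ \sqrt2 r&0&\sqrt2 q\\ 0&\sqrt2 r&2\lambda\end{pmatrix}$. Differential polynomials $a_i,b_i,c_i$ in $q,r$ and their $x$-derivatives are defined by $a_0=-1$, $b_0=c_0=0$ and, for $i\ge0$, $a_{i+1}=\frac12\partial^{-1}(q c_{i,x}+r b_{i,x})$, $b_{i+1}=-\frac12 b_{i,x}-q a_i$, $c_{i+1}=\frac12 c_{i,x}-r a_i$ ($\partial=d/dx$), with the constants of integration fixed by requiring $a_i|_{u=0}=b_i|_{u=0}=c_i|_{u=0}=0$ for $i\ge1$ (e.g. $a_1=0$, $b_1=q$, $c_1=r$, $a_2=\frac12qr$, $b_2=-\frac12q_x$, $c_2=\frac12r_x$). Phase space $\mathbb{R}^{6N}$ with coordinates $\phi_{ij},\psi_{ij}$ ($i=1,2,3$, $j=1,\dots,N$), $P_i=(\phi_{i1},\dots,\phi_{iN})^T$, $Q_i=(\psi_{i1},\dots,\psi_{iN})^T$, $\langle\cdot,\cdot\rangle$ the standard inner product on $\mathbb{R}^N$. Set $\tilde q=\sqrt2(\langle P_1,BQ_2\rangle+\langle P_2,BQ_3\rangle)$, $\tilde r=\sqrt2(\langle P_2,BQ_1\rangle+\langle P_3,BQ_2\rangle)$, $\tilde u=(\tilde q,\tilde r)^T$. The nonlinearized spatial system is $(\phi_{1j},\phi_{2j},\phi_{3j})^T_x=U(\tilde u,\lambda_j)(\phi_{1j},\phi_{2j},\phi_{3j})^T$,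 $(\psi_{1j},\psi_{2j},\psi_{3j})^T_x=-U(\tilde u,\lambda_j)^T(\psi_{1j},\psi_{2j},\psi_{3j})^T$, $j=1,\dots,N$. For a differential polynomial $Z$ in $u$, $\tilde Z$ denotes the result of substituting $u=\tilde u$ (with $x$-derivatives taken along the solution, equivalently eliminated using the nonlinearized spatial system). $F_1=-8(\langle P_1,BQ_1\rangle-\langle P_3,BQ_3\rangle)$ and for $m\ge2$: $F_m=4\sum_{i=1}^{m-1}\big[(\langle A^{i-1}P_1,BQ_1\rangle-\langle A^{i-1}P_3,BQ_3\rangle)(\langle A^{m-i-1}P_1,BQ_1\rangle-\langle A^{m-i-1}P_3,BQ_3\rangle)+2(\langle A^{i-1}P_1,BQ_2\rangle+\langle A^{i-1}P_2,BQ_3\rangle)(\langle A^{m-i-1}P_2,BQ_1\rangle+\langle A^{m-i-1}P_3,BQ_2\rangle)\big]-8(\langle A^{m-1}P_1,BQ_1\rangle-\langle A^{m-1}P_3,BQ_3\rangle)$. *)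

theory Defs
  imports "HOL-Analysis.Analysis"
begin

text \<open>A jet is a pair of sequences (q_0, q_1, q_2, ...) and (r_0, r_1, ...), where q_k stands
for the k-th x-derivative of q.\<close>

type_synonym jetfun = "(nat \<Rightarrow> real) \<Rightarrow> (nat \<Rightarrow> real) \<Rightarrow> real"

inductive diffpoly :: "jetfun \<Rightarrow> bool" where
  dp_const: "diffpoly (\<lambda>Q R. c)"
| dp_q: "diffpoly (\<lambda>Q R. Q k)"
| dp_r: "diffpoly (\<lambda>Q R. R k)"
| dp_add: "diffpoly f \<Longrightarrow> diffpoly g \<Longrightarrow> diffpoly (\<lambda>Q R. f Q R + g Q R)"
| dp_mult: "diffpoly f \<Longrightarrow> diffpoly g \<Longrightarrow> diffpoly (\<lambda>Q R. f Q R * g Q R)"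

definition jet :: "(real \<Rightarrow> real) \<Rightarrow> real \<Rightarrow> nat \<Rightarrow> real" where
  "jet f x k = (deriv ^^ k) f x"

definition smooth :: "(real \<Rightarrow> real) \<Rightarrow> bool" where
  "smooth f \<longleftrightarrow> (\<forall>k x. (deriv ^^ k) f differentiable (at x))"

definition along :: "jetfun \<Rightarrow> (real \<Rightarrow> real) \<Rightarrow> (real \<Rightarrow> real) \<Rightarrow> real \<Rightarrow> real" where
  "along Z q r x = Z (jet q x) (jet r x)"

definition Dx :: "jetfun \<Rightarrow> jetfun" where
  "Dx Z = (THE W. diffpoly W \<and>
     (\<forall>q r x. smooth q \<longrightarrow> smooth r \<longrightarrow>
        (along Z q r has_real_derivative along W q r x) (at x)))"

definition Dinv :: "jetfun \<Rightarrow> jetfun" where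
  "Dinv Z = (THE W. diffpoly W \<and> W (\<lambda>_. 0) (\<lambda>_. 0) = 0 \<and>
     (\<forall>q r x. smooth q \<longrightarrow> smooth r \<longrightarrow>
        (along W q r has_real_derivative along Z q r x) (at x)))"

fun abc :: "nat \<Rightarrow> jetfun \<times> jetfun \<times> jetfun" where
  "abc 0 = ((\<lambda>Q R. -1), (\<lambda>Q R. 0), (\<lambda>Q R. 0))"
| "abc (Suc i) = (case abc i of (a, b, c) \<Rightarrow>
     ((\<lambda>Q R. (1/2) * Dinv (\<lambda>Q R. Q 0 * Dx c Q R + R 0 * Dx b Q R) Q R),
      (\<lambda>Q R. -(1/2) * Dx b Q R - Q 0 * a Q R),
      (\<lambda>Q R. (1/2) * Dx c Q R - R 0 * a Q R)))"

definition a_dp :: "nat \<Rightarrow> jetfun" where "a_dp i = fst (abc i)"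
definition b_dp :: "nat \<Rightarrow> jetfun" where "b_dp i = fst (snd (abc i))"
definition c_dp :: "nat \<Rightarrow> jetfun" where "c_dp i = snd (snd (abc i))"

text \<open>P a j = \<phi>_{aj}, Q b j = \<psi>_{bj}, lam j = \<lambda>_j, mu j = \<mu>_j.
 ip lam mu N P Q k a b = \<langle>A^k P_a, B Q_b\<rangle> with A = diag(\<lambda>_j), B = diag(\<mu>_j).\<close>
definition ip :: "(nat \<Rightarrow> real) \<Rightarrow> (nat \<Rightarrow> real) \<Rightarrow> nat \<Rightarrow> (nat \<Rightarrow> nat \<Rightarrow> real) \<Rightarrow>
    (nat \<Rightarrow> nat \<Rightarrow> real) \<Rightarrow> nat \<Rightarrow> nat \<Rightarrow> nat \<Rightarrow> real" where
  "ip lam mu N P Q k a b = (\<Sum>j=1..N. (lam j ^ k * P a j) * (mu j * Q b j))"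

definition Fm :: "(nat \<Rightarrow> real) \<Rightarrow> (nat \<Rightarrow> real) \<Rightarrow> nat \<Rightarrow> (nat \<Rightarrow> nat \<Rightarrow> real) \<Rightarrow>
    (nat \<Rightarrow> nat \<Rightarrow> real) \<Rightarrow> nat \<Rightarrow> real" where
  "Fm lam mu N P Q m =
    (let g = ip lam mu N P Q in
     if m = 1 then -8 * (g 0 1 1 - g 0 3 3)
     else 4 * (\<Sum>i=1..m-1.
              (g (i-1) 1 1 - g (i-1) 3 3) * (g (m-i-1) 1 1 - g (m-i-1) 3 3)
            + 2 * (g (i-1) 1 2 + g (i-1) 2 3) * (g (m-i-1) 2 1 + g (m-i-1) 3 2))
          - 8 * (g (m-1) 1 1 - g (m-1) 3 3))"

fun dn :: "nat \<Rightarrow> real" where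
  "dn 0 = 0"
| "dn (Suc 0) = -1/8"
| "dn (Suc (Suc 0)) = 3/128"
| "dn (Suc (Suc (Suc k))) =
     (let n = Suc (Suc (Suc k)) in
      -(1/2) * (\<Sum>i\<in>{1..n-1}. dn i * dn (n-i)) - (1/4) * dn (n-1)
      - (1/8) * (\<Sum>i\<in>{1..n-2}. dn i * dn (n-i-1)))"

definition Im :: "(nat \<Rightarrow> real) \<Rightarrow> (nat \<Rightarrow> real) \<Rightarrow> nat \<Rightarrow> (nat \<Rightarrow> nat \<Rightarrow> real) \<Rightarrow>
    (nat \<Rightarrow> nat \<Rightarrow> real) \<Rightarrow> nat \<Rightarrow> real" where
  "Im lam mu N P Q m =
    (if m = 0 then 1
     else (\<Sum>n=1..m. dn n *
        (\<Sum>is\<in>{is. length is = n \<and> (\<forall>i\<in>set is. 1 \<le> i) \<and> sum_list is = m}.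
            prod_list (map (Fm lam mu N P Q) is))))"

end

theory Submission
  imports Defs "HOL-Computational_Algebra.Computational_Algebra" "HOL-Computational_Algebra.Field_as_Ring"
begin

definition LS :: "(real \<Rightarrow> real) \<Rightarrow> real \<Rightarrow> bool" where
  "LS q x \<longleftrightarrow> (\<forall>k. (deriv ^^ k) q differentiable (at x))"

lemma deriv_poly_funpow: "(deriv ^^ k) (poly p) = poly ((pderiv ^^ k) p)"
proof (induction k)
  case 0 then show ?case by simp
next
  case (Suc k)
  show ?case by (simp add: Suc) (rule ext, rule DERIV_imp_deriv, rule poly_DERIV)
qed

lemma smooth_poly: "smooth (poly p)"
  unfolding smooth_def deriv_poly_funpow
  using poly_DERIV real_differentiable_def by blast

lemma jet_poly: "jet (poly p) x k = poly ((pderiv ^^ k) p) x"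
  by (simp add: jet_def deriv_poly_funpow)

lemma poly_higher_pderiv_0: "poly ((pderiv ^^ k) p) 0 = fact k * coeff p k"
  by (simp add: poly_0_coeff_0 coeff_higher_pderiv pochhammer_fact)

lemma realize_jet: "\<exists>T. \<forall>k<K. poly ((pderiv ^^ k) T) 0 = (Q k :: real)"
proof -
  define T where "T = (\<Sum>i<K. monom (Q i / fact i) i)"
  have "coeff T k = (if k < K then Q k / fact k else 0)" for k
    unfolding T_def coeff_sum coeff_monom by (auto simp: if_distrib)
  then show ?thesis by (intro exI[of _ T]) (simp add: poly_higher_pderiv_0)
qed

lemma diffpoly_finite_dep:
  assumes "diffpoly Z"
  shows "\<exists>K. \<forall>Q R Q' R'. (\<forall>k<K. Q k = Q' k) \<longrightarrow> (\<forall>k<K. R k = R' k) \<longrightarrow> Z Q R = Z Q' R'"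
  using assms
proof (induction rule: diffpoly.induct)
  case (dp_const c) then show ?case by auto
next
  case (dp_q k) then show ?case by (intro exI[of _ "Suc k"]) auto
next
  case (dp_r k) then show ?case by (intro exI[of _ "Suc k"]) auto
next
  case (dp_add f g)
  then obtain K1 K2 where "\<forall>Q R Q' R'. (\<forall>k<K1. Q k = Q' k) \<longrightarrow> (\<forall>k<K1. R k = R' k) \<longrightarrow> f Q R = f Q' R'"
    "\<forall>Q R Q' R'. (\<forall>k<K2. Q k = Q' k) \<longrightarrow> (\<forall>k<K2. R k = R' k) \<longrightarrow> g Q R = g Q' R'" by blast
  note K = this
  then show ?case
  proof (intro exI[of _ "max K1 K2"] allI impI)
    fix Q R Q' R' :: "nat \<Rightarrow> real"
    assume h: "\<forall>k<max K1 K2. Q k = Q' k" "\<forall>k<max K1 K2. R k = R' k"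
    have "f Q R = f Q' R'" using K h by auto
    moreover have "g Q R = g Q' R'" using K h by auto
    ultimately show "f Q R + g Q R = f Q' R' + g Q' R'" by simp
  qed
next
  case (dp_mult f g)
  then obtain K1 K2 where "\<forall>Q R Q' R'. (\<forall>k<K1. Q k = Q' k) \<longrightarrow> (\<forall>k<K1. R k = R' k) \<longrightarrow> f Q R = f Q' R'"
    "\<forall>Q R Q' R'. (\<forall>k<K2. Q k = Q' k) \<longrightarrow> (\<forall>k<K2. R k = R' k) \<longrightarrow> g Q R = g Q' R'" by blast
  note K = this
  then show ?case
  proof (intro exI[of _ "max K1 K2"] allI impI)
    fix Q R Q' R' :: "nat \<Rightarrow> real"
    assume h: "\<forall>k<max K1 K2. Q k = Q' k" "\<forall>k<max K1 K2. R k = R' k"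
    have "f Q R = f Q' R'" using K h by auto
    moreover have "g Q R = g Q' R'" using K h by auto
    ultimately show "f Q R * g Q R = f Q' R' * g Q' R'" by simp
  qed
qed

lemma dp_zero_unique:
  assumes "diffpoly W" and "\<And>q r x. smooth q \<Longrightarrow> smooth r \<Longrightarrow> along W q r x = 0"
  shows "W Q R = 0"
proof -
  obtain K where K: "\<forall>Q R Q' R'. (\<forall>k<K. Q k = Q' k) \<longrightarrow> (\<forall>k<K. R k = R' k) \<longrightarrow> W Q R = W Q' R'"
    using diffpoly_finite_dep[OF assms(1)] by blast
  obtain T where T: "\<forall>k<K. poly ((pderiv ^^ k) T) 0 = Q k" using realize_jet by blast
  obtain U where U: "\<forall>k<K. poly ((pderiv ^^ k) U) 0 = R k" using realize_jet by blast
  have "along W (poly T) (poly U) 0 = 0" using assms(2) smooth_poly by blast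
  then have "W (jet (poly T) 0) (jet (poly U) 0) = 0" by (simp add: along_def)
  moreover have "W (jet (poly T) 0) (jet (poly U) 0) = W Q R"
    using K T U by (auto simp: jet_poly)
  ultimately show ?thesis by simp
qed

lemma pderiv_power_dvd_gen:
  assumes "p ^ Suc n dvd P" shows "p ^ n dvd pderiv (P :: real poly)"
proof -
  obtain S where S: "P = p ^ Suc n * S" using assms by (auto simp: dvd_def)
  have "pderiv P = (smult (of_nat (Suc n)) (p ^ n) * pderiv p) * S + p ^ Suc n * pderiv S"
    unfolding S pderiv_mult pderiv_power_Suc by (simp add: algebra_simps)
  also have "\<dots> = p ^ n * (smult (of_nat (Suc n)) (pderiv p * S) + p * pderiv S)"
    by (simp add: algebra_simps)
  finally show ?thesis by simp
qed

lemma pderiv_root_power_dvd: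
  assumes "[:-a,1:] ^ Suc n dvd P" shows "[:-a,1:] ^ n dvd pderiv (P :: real poly)"
  using pderiv_power_dvd_gen assms by blast

lemma root_power_dvd_higher_pderiv:
  assumes "[:-a,1:] ^ n dvd P" "k \<le> n" shows "[:-a,1:] ^ (n - k) dvd (pderiv ^^ k) (P :: real poly)"
  using assms(2)
proof (induction k)
  case 0 then show ?case using assms(1) by simp
next
  case (Suc k)
  then have "[:-a,1:] ^ Suc (n - Suc k) dvd (pderiv ^^ k) P" using Suc_diff_Suc by fastforce
  then show ?case by (simp add: pderiv_root_power_dvd)
qed

lemma root_power_higher_pderiv_zero:
  assumes "[:-a,1:] ^ n dvd P" "k < n" shows "poly ((pderiv ^^ k) (P :: real poly)) a = 0"
proof -
  have "[:-a,1:] ^ (n - k) dvd (pderiv ^^ k) P" using root_power_dvd_higher_pderiv assms by simp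
  moreover have "[:-a,1:] dvd [:-a,1:] ^ (n - k)" using assms(2)
    by (metis dvd_power zero_less_diff)
  ultimately show ?thesis using poly_eq_0_iff_dvd dvd_trans by blast
qed

lemma cutoff_poly: "\<exists>Hp A. Hp = 1 - A * [:0,1:] ^ K \<and> [:-1,1:] ^ K dvd (Hp :: real poly)"
proof -
  have c: "coprime ([:0,1::real:] ^ K) ([:-1,1:] ^ K)"
  proof -
    have "coprime [:0,1::real:] [:-1,1:]"
    proof (rule coprimeI)
      fix c assume "c dvd [:0,1::real:]" "c dvd [:-1,1:]"
      then have "c dvd [:0,1::real:] - [:-1,1:]" by (rule dvd_diff)
      then show "is_unit c" by (simp add: one_pCons[symmetric])
    qed
    then show ?thesis by simp
  qed
  define A where "A = fst (bezout_coefficients ([:0,1::real:] ^ K) ([:-1,1:] ^ K))"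
  define B where "B = snd (bezout_coefficients ([:0,1::real:] ^ K) ([:-1,1:] ^ K))"
  have g: "gcd ([:0,1::real:] ^ K) ([:-1,1:] ^ K) = 1" using c by (rule coprime_imp_gcd_eq_1)
  have "A * [:0,1:] ^ K + B * [:-1,1:] ^ K = 1"
    using bezout_coefficients_fst_snd[of "[:0,1::real:] ^ K" "[:-1,1:] ^ K"]
    unfolding A_def B_def g .
  then show ?thesis by (intro exI[of _ "B * [:-1,1:] ^ K"] exI[of _ A]) (auto simp: algebra_simps)
qed

lemma dp_const_unique:
  assumes "diffpoly W" and "W (\<lambda>_. 0) (\<lambda>_. 0) = 0"
    and "\<And>q r x. smooth q \<Longrightarrow> smooth r \<Longrightarrow> (along W q r has_real_derivative 0) (at x)"
  shows "W Q R = 0"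
proof -
  obtain K where K: "\<forall>Q R Q' R'. (\<forall>k<K. Q k = Q' k) \<longrightarrow> (\<forall>k<K. R k = R' k) \<longrightarrow> W Q R = W Q' R'"
    using diffpoly_finite_dep[OF assms(1)] by blast
  obtain T where T: "\<forall>k<K. poly ((pderiv ^^ k) T) 0 = Q k" using realize_jet by blast
  obtain U where U: "\<forall>k<K. poly ((pderiv ^^ k) U) 0 = R k" using realize_jet by blast
  obtain Hp A where HA: "Hp = 1 - A * [:0,1:] ^ K" "[:-1,1:] ^ K dvd (Hp :: real poly)"
    using cutoff_poly by blast
  have j0: "poly ((pderiv ^^ k) (V * Hp)) 0 = poly ((pderiv ^^ k) V) 0" if "k < K" for k V
  proof -
    have "V = V * Hp + V * A * [:-0,1:] ^ K" unfolding HA(1) by (simp add: algebra_simps)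
    then have "(pderiv ^^ k) V = (pderiv ^^ k) (V * Hp) + (pderiv ^^ k) (V * A * [:-0,1:] ^ K)"
      by (metis higher_pderiv_add)
    moreover have "poly ((pderiv ^^ k) (V * A * [:-0,1:] ^ K)) 0 = 0"
      by (rule root_power_higher_pderiv_zero[OF _ that]) simp
    ultimately show ?thesis by simp
  qed
  have j1: "poly ((pderiv ^^ k) (V * Hp)) 1 = 0" if "k < K" for k V
    by (rule root_power_higher_pderiv_zero[OF _ that]) (use HA(2) in auto)
  define q where "q = poly (T * Hp)"
  define r where "r = poly (U * Hp)"
  have "along W q r 0 = along W q r 1"
    using DERIV_isconst_all assms(3) smooth_poly unfolding q_def r_def by blast
  moreover have "along W q r 0 = W Q R"
  proof -
    have "\<forall>k<K. jet q 0 k = Q k" using T j0 by (simp add: q_def jet_poly)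
    moreover have "\<forall>k<K. jet r 0 k = R k" using U j0 by (simp add: r_def jet_poly)
    ultimately show ?thesis unfolding along_def using K by metis
  qed
  moreover have "along W q r 1 = W (\<lambda>_. 0) (\<lambda>_. 0)"
  proof -
    have "\<forall>k<K. jet q 1 k = 0" using j1 by (simp add: q_def jet_poly)
    moreover have "\<forall>k<K. jet r 1 k = 0" using j1 by (simp add: r_def jet_poly)
    ultimately show ?thesis unfolding along_def using K by metis
  qed
  ultimately show ?thesis using assms(2) by simp
qed

lemma along_fun: "along Z q r = (\<lambda>x. Z (jet q x) (jet r x))"
  by (rule ext) (simp add: along_def)

lemma smooth_LS: "smooth q \<Longrightarrow> LS q x"
  by (simp add: smooth_def LS_def)

lemma dp_diff: "diffpoly f \<Longrightarrow> diffpoly g \<Longrightarrow> diffpoly (\<lambda>Q R. f Q R - g Q R)"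
proof -
  assume "diffpoly f" "diffpoly g"
  then have "diffpoly (\<lambda>Q R. f Q R + (\<lambda>Q R. (\<lambda>Q R. -1) Q R * g Q R) Q R)"
    by (intro dp_add dp_mult dp_const)
  then show ?thesis by simp
qed

lemma dp_cmult: "diffpoly f \<Longrightarrow> diffpoly (\<lambda>Q R. c * f Q R)"
proof -
  assume "diffpoly f"
  then have "diffpoly (\<lambda>Q R. (\<lambda>Q R. c) Q R * f Q R)" by (intro dp_mult dp_const)
  then show ?thesis by simp
qed

lemma dp_add': "diffpoly f \<Longrightarrow> diffpoly g \<Longrightarrow> diffpoly (\<lambda>Q R. f Q R + g Q R)"
  by (rule dp_add)

lemma dp_sum: "finite S \<Longrightarrow> (\<And>i. i \<in> S \<Longrightarrow> diffpoly (f i)) \<Longrightarrow> diffpoly (\<lambda>Q R. \<Sum>i\<in>S. f i Q R)"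
proof (induction S rule: finite_induct)
  case empty
  then show ?case using dp_const[of 0] by simp
next
  case (insert a S)
  then have "diffpoly (\<lambda>Q R. f a Q R + (\<lambda>Q R. \<Sum>i\<in>S. f i Q R) Q R)"
    by (intro dp_add) auto
  then show ?case using insert by simp
qed

lemma along_LS_deriv:
  assumes "diffpoly Z"
  shows "\<exists>W. diffpoly W \<and> W (\<lambda>_. 0) (\<lambda>_. 0) = 0 \<and>
     (\<forall>q r x. LS q x \<longrightarrow> LS r x \<longrightarrow> (along Z q r has_real_derivative along W q r x) (at x))"
  using assms
proof (induction rule: diffpoly.induct)
  case (dp_const c)
  show ?case
    by (intro exI[of _ "\<lambda>Q R. 0"]) (auto intro: diffpoly.intros simp: along_def)
next
  case (dp_q k)
  show ?case
  proof (intro exI[of _ "\<lambda>Q R. Q (Suc k)"] conjI allI impI)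
    fix q r :: "real \<Rightarrow> real" and x assume "LS q x" "LS r x"
    then have "(deriv ^^ k) q differentiable (at x)" by (simp add: LS_def)
    then have "((deriv ^^ k) q has_real_derivative deriv ((deriv ^^ k) q) x) (at x)"
      by (simp add: DERIV_deriv_iff_real_differentiable)
    moreover have "along (\<lambda>Q R. Q k) q r = (deriv ^^ k) q" by (simp add: along_def jet_def fun_eq_iff)
    ultimately show "(along (\<lambda>Q R. Q k) q r has_real_derivative along (\<lambda>Q R. Q (Suc k)) q r x) (at x)"
      by (simp add: along_def jet_def)
  qed (auto intro: diffpoly.intros)
next
  case (dp_r k)
  show ?case
  proof (intro exI[of _ "\<lambda>Q R. R (Suc k)"] conjI allI impI)
    fix q r :: "real \<Rightarrow> real" and x assume "LS q x" "LS r x"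
    then have "(deriv ^^ k) r differentiable (at x)" by (simp add: LS_def)
    then have "((deriv ^^ k) r has_real_derivative deriv ((deriv ^^ k) r) x) (at x)"
      by (simp add: DERIV_deriv_iff_real_differentiable)
    moreover have "along (\<lambda>Q R. R k) q r = (deriv ^^ k) r" by (simp add: along_def jet_def fun_eq_iff)
    ultimately show "(along (\<lambda>Q R. R k) q r has_real_derivative along (\<lambda>Q R. R (Suc k)) q r x) (at x)"
      by (simp add: along_def jet_def)
  qed (auto intro: diffpoly.intros)
next
  case (dp_add f g)
  then obtain Wf Wg where Wf: "diffpoly Wf" "Wf (\<lambda>_. 0) (\<lambda>_. 0) = 0"
     "\<forall>q r x. LS q x \<longrightarrow> LS r x \<longrightarrow> (along f q r has_real_derivative along Wf q r x) (at x)"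
    and Wg: "diffpoly Wg" "Wg (\<lambda>_. 0) (\<lambda>_. 0) = 0"
     "\<forall>q r x. LS q x \<longrightarrow> LS r x \<longrightarrow> (along g q r has_real_derivative along Wg q r x) (at x)"
    by blast
  show ?case
  proof (intro exI[of _ "\<lambda>Q R. Wf Q R + Wg Q R"] conjI allI impI)
    fix q r :: "real \<Rightarrow> real" and x assume "LS q x" "LS r x"
    then have "((\<lambda>x. along f q r x + along g q r x) has_real_derivative along Wf q r x + along Wg q r x) (at x)"
      using Wf Wg by (intro DERIV_add) auto
    then show "(along (\<lambda>Q R. f Q R + g Q R) q r has_real_derivative along (\<lambda>Q R. Wf Q R + Wg Q R) q r x) (at x)"
      by (simp add: along_fun)
  qed (use Wf Wg in \<open>auto intro: diffpoly.intros\<close>)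
next
  case (dp_mult f g)
  then obtain Wf Wg where Wf: "diffpoly Wf" "Wf (\<lambda>_. 0) (\<lambda>_. 0) = 0"
     "\<forall>q r x. LS q x \<longrightarrow> LS r x \<longrightarrow> (along f q r has_real_derivative along Wf q r x) (at x)"
    and Wg: "diffpoly Wg" "Wg (\<lambda>_. 0) (\<lambda>_. 0) = 0"
     "\<forall>q r x. LS q x \<longrightarrow> LS r x \<longrightarrow> (along g q r has_real_derivative along Wg q r x) (at x)"
    by blast
  show ?case
  proof (intro exI[of _ "\<lambda>Q R. Wf Q R * g Q R + Wg Q R * f Q R"] conjI allI impI)
    fix q r :: "real \<Rightarrow> real" and x assume "LS q x" "LS r x"
    then have "((\<lambda>x. along f q r x * along g q r x) has_real_derivative along Wf q r x * along g q r x + along Wg q r x * along f q r x) (at x)"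
      using Wf Wg by (intro DERIV_mult) auto
    then show "(along (\<lambda>Q R. f Q R * g Q R) q r has_real_derivative along (\<lambda>Q R. Wf Q R * g Q R + Wg Q R * f Q R) q r x) (at x)"
      by (simp add: along_fun)
  qed (use Wf Wg dp_mult in \<open>auto intro: diffpoly.intros\<close>)
qed

lemma Dx_char:
  assumes "diffpoly Z"
  shows "diffpoly (Dx Z) \<and> Dx Z (\<lambda>_. 0) (\<lambda>_. 0) = 0 \<and>
     (\<forall>q r x. LS q x \<longrightarrow> LS r x \<longrightarrow> (along Z q r has_real_derivative along (Dx Z) q r x) (at x))"
proof -
  obtain W where W: "diffpoly W" "W (\<lambda>_. 0) (\<lambda>_. 0) = 0"
    "\<forall>q r x. LS q x \<longrightarrow> LS r x \<longrightarrow> (along Z q r has_real_derivative along W q r x) (at x)"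
    using along_LS_deriv[OF assms] by blast
  have ex: "diffpoly W \<and> (\<forall>q r x. smooth q \<longrightarrow> smooth r \<longrightarrow> (along Z q r has_real_derivative along W q r x) (at x))"
    using W smooth_LS by blast
  have uniq: "W' = W" if h: "diffpoly W' \<and> (\<forall>q r x. smooth q \<longrightarrow> smooth r \<longrightarrow> (along Z q r has_real_derivative along W' q r x) (at x))" for W'
  proof -
    have "(\<lambda>Q R. W' Q R - W Q R) Q R = 0" for Q R
    proof (rule dp_zero_unique[where W="\<lambda>Q R. W' Q R - W Q R"])
      show "diffpoly (\<lambda>Q R. W' Q R - W Q R)" using h W by (intro dp_diff) auto
      fix q r x assume "smooth q" "smooth r"
      then have "along W' q r x = along W q r x"
        using h W smooth_LS DERIV_unique by metis
      then show "along (\<lambda>Q R. W' Q R - W Q R) q r x = 0" by (simp add: along_def)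
    qed
    then show "W' = W" by (auto simp: fun_eq_iff)
  qed
  have "Dx Z = W"
    unfolding Dx_def using ex uniq by (rule the_equality)
  then show ?thesis using W by simp
qed

lemma Dinv_char:
  assumes "diffpoly W" "W (\<lambda>_. 0) (\<lambda>_. 0) = 0"
    and "\<And>q r x. smooth q \<Longrightarrow> smooth r \<Longrightarrow> (along W q r has_real_derivative along Z q r x) (at x)"
  shows "Dinv Z = W"
proof -
  have ex: "diffpoly W \<and> W (\<lambda>_. 0) (\<lambda>_. 0) = 0 \<and> (\<forall>q r x. smooth q \<longrightarrow> smooth r \<longrightarrow> (along W q r has_real_derivative along Z q r x) (at x))"
    using assms by blast
  have uniq: "W' = W" if h: "diffpoly W' \<and> W' (\<lambda>_. 0) (\<lambda>_. 0) = 0 \<and> (\<forall>q r x. smooth q \<longrightarrow> smooth r \<longrightarrow> (along W' q r has_real_derivative along Z q r x) (at x))" for W'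
  proof -
    have "(\<lambda>Q R. W' Q R - W Q R) Q R = 0" for Q R
    proof (rule dp_const_unique[where W="\<lambda>Q R. W' Q R - W Q R"])
      show "diffpoly (\<lambda>Q R. W' Q R - W Q R)" using h assms by (intro dp_diff) auto
      show "W' (\<lambda>_. 0) (\<lambda>_. 0) - W (\<lambda>_. 0) (\<lambda>_. 0) = 0" using h assms by simp
      fix q r x assume "smooth q" "smooth r"
      then have "((\<lambda>x. along W' q r x - along W q r x) has_real_derivative along Z q r x - along Z q r x) (at x)"
        using h assms by (intro DERIV_diff) auto
      then show "(along (\<lambda>Q R. W' Q R - W Q R) q r has_real_derivative 0) (at x)"
        by (simp add: along_fun)
    qed
    then show "W' = W" by (auto simp: fun_eq_iff)
  qed
  show ?thesis
    unfolding Dinv_def using ex uniq by (rule the_equality)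
qed


lemma sum_reflect: "(\<Sum>i=1..m. f i * g (Suc m - i)) = (\<Sum>i=1..m. f (Suc m - i) * (g i :: real))"
  by (rule sum.reindex_bij_witness[where i="\<lambda>i. Suc m - i" and j="\<lambda>i. Suc m - i"]) auto

lemma telesc:
  fixes al be ga :: "nat \<Rightarrow> real" and q r :: real
  assumes "be 1 = q" "ga 1 = r"
  shows "(\<Sum>i=1..m. (q*ga i - r*be i)*al(Suc m-i) + al i*(q*ga(Suc m-i) - r*be(Suc m-i))
        + (-2*be(Suc i) - 2*q*al i)*ga(Suc m-i) + be i*(2*ga(Suc (Suc m-i)) + 2*r*al(Suc m-i)))
       = 2*(q*ga(Suc m) - r*be(Suc m))"
proof -
  define h where "h i = be i * ga (Suc (Suc m) - i)" for i
  have e1: "(\<Sum>i=1..m. ga i * al (Suc m - i)) = (\<Sum>i=1..m. al i * ga (Suc m - i))"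
    using sum_reflect[of ga al m] by (simp add: mult.commute)
  have e2: "(\<Sum>i=1..m. be i * al (Suc m - i)) = (\<Sum>i=1..m. al i * be (Suc m - i))"
    using sum_reflect[of be al m] by (simp add: mult.commute)
  have e3: "(\<Sum>i=1..m. be i * ga (Suc (Suc m - i)) - be (Suc i) * ga (Suc m - i)) = -(h (Suc m) - h 1)"
  proof -
    have "(\<Sum>i=1..m. be i * ga (Suc (Suc m - i)) - be (Suc i) * ga (Suc m - i)) = (\<Sum>i=1..m. -(h (Suc i) - h i))"
      by (rule sum.cong) (auto simp: h_def Suc_diff_le)
    also have "\<dots> = -(\<Sum>i=1..m. h (Suc i) - h i)" by (simp add: sum_subtractf)
    also have "\<dots> = -(h (Suc m) - h 1)" by (subst sum_Suc_diff) auto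
    finally show ?thesis .
  qed
  have "(\<Sum>i=1..m. (q*ga i - r*be i)*al(Suc m-i) + al i*(q*ga(Suc m-i) - r*be(Suc m-i))
        + (-2*be(Suc i) - 2*q*al i)*ga(Suc m-i) + be i*(2*ga(Suc (Suc m-i)) + 2*r*al(Suc m-i)))
     = (\<Sum>i=1..m. q*(ga i * al (Suc m - i) - al i * ga (Suc m - i)) + r*(be i * al (Suc m - i) - al i * be (Suc m - i))
        + 2*(be i * ga (Suc (Suc m - i)) - be (Suc i) * ga (Suc m - i)))"
    by (rule sum.cong) (auto simp: algebra_simps)
  also have "\<dots> = q*(\<Sum>i=1..m. ga i * al (Suc m - i) - al i * ga (Suc m - i))
      + r*(\<Sum>i=1..m. be i * al (Suc m - i) - al i * be (Suc m - i))
      + 2*(\<Sum>i=1..m. be i * ga (Suc (Suc m - i)) - be (Suc i) * ga (Suc m - i))"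
    by (simp only: sum.distrib sum_distrib_left)
  also have "\<dots> = q*((\<Sum>i=1..m. ga i * al (Suc m - i)) - (\<Sum>i=1..m. al i * ga (Suc m - i)))
      + r*((\<Sum>i=1..m. be i * al (Suc m - i)) - (\<Sum>i=1..m. al i * be (Suc m - i)))
      + 2*(\<Sum>i=1..m. be i * ga (Suc (Suc m - i)) - be (Suc i) * ga (Suc m - i))"
    by (simp only: sum_subtractf)
  also have "\<dots> = 2*(q*ga(Suc m) - r*be(Suc m))"
    unfolding e1 e2 e3 using assms by (simp add: h_def algebra_simps)
  finally show ?thesis .
qed

abbreviation "aa \<equiv> a_dp"
abbreviation "bb \<equiv> b_dp"
abbreviation "cc \<equiv> c_dp"

lemma abc_0: "a_dp 0 = (\<lambda>Q R. -1)" "b_dp 0 = (\<lambda>Q R. 0)" "c_dp 0 = (\<lambda>Q R. 0)"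
  by (simp_all add: a_dp_def b_dp_def c_dp_def)

lemma abc_Suc:
  "a_dp (Suc i) = (\<lambda>Q R. (1/2) * Dinv (\<lambda>Q R. Q 0 * Dx (c_dp i) Q R + R 0 * Dx (b_dp i) Q R) Q R)"
  "b_dp (Suc i) = (\<lambda>Q R. -(1/2) * Dx (b_dp i) Q R - Q 0 * a_dp i Q R)"
  "c_dp (Suc i) = (\<lambda>Q R. (1/2) * Dx (c_dp i) Q R - R 0 * a_dp i Q R)"
  by (cases "abc i" rule: prod_cases3; simp add: a_dp_def b_dp_def c_dp_def)+

lemma Dx_const: "Dx (\<lambda>Q R. c) = (\<lambda>Q R. 0)"
proof -
  have D: "diffpoly (Dx (\<lambda>Q R. c))" "\<forall>q r x. LS q x \<longrightarrow> LS r x \<longrightarrow> (along (\<lambda>Q R. c) q r has_real_derivative along (Dx (\<lambda>Q R. c)) q r x) (at x)"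
    using Dx_char[OF dp_const] by blast+
  have "Dx (\<lambda>Q R. c) Q R = 0" for Q R
  proof (rule dp_zero_unique[OF D(1)])
    fix q r x assume "smooth q" "smooth r"
    then have "(along (\<lambda>Q R. c) q r has_real_derivative along (Dx (\<lambda>Q R. c)) q r x) (at x)"
      using D(2) smooth_LS by blast
    then have "((\<lambda>x. c) has_real_derivative along (Dx (\<lambda>Q R. c)) q r x) (at x)" by (simp add: along_fun)
    then show "along (Dx (\<lambda>Q R. c)) q r x = 0" by (metis DERIV_unique DERIV_const)
  qed
  then show ?thesis by (auto simp: fun_eq_iff)
qed

lemma bc_1: "b_dp 1 = (\<lambda>Q R. Q 0)" "c_dp 1 = (\<lambda>Q R. R 0)"
  by (simp_all add: abc_Suc[where i=0, simplified] abc_0 Dx_const)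

lemma along_q0: "along (\<lambda>Q R. Q 0) q r x = q x" "along (\<lambda>Q R. R 0) q r x = r x"
  by (simp_all add: along_def jet_def)

lemma bder:
  assumes "diffpoly (b_dp j)" "LS q x" "LS r x"
  shows "(along (b_dp j) q r has_real_derivative (-2 * along (b_dp (Suc j)) q r x - 2 * q x * along (a_dp j) q r x)) (at x)"
proof -
  have "(along (b_dp j) q r has_real_derivative along (Dx (b_dp j)) q r x) (at x)"
    using Dx_char[OF assms(1)] assms by blast
  moreover have "along (Dx (b_dp j)) q r x = -2 * along (b_dp (Suc j)) q r x - 2 * q x * along (a_dp j) q r x"
    by (simp add: abc_Suc along_def jet_def)
  ultimately show ?thesis by simp
qed

lemma cder:
  assumes "diffpoly (c_dp j)" "LS q x" "LS r x"
  shows "(along (c_dp j) q r has_real_derivative (2 * along (c_dp (Suc j)) q r x + 2 * r x * along (a_dp j) q r x)) (at x)"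
proof -
  have "(along (c_dp j) q r has_real_derivative along (Dx (c_dp j)) q r x) (at x)"
    using Dx_char[OF assms(1)] assms by blast
  moreover have "along (Dx (c_dp j)) q r x = 2 * along (c_dp (Suc j)) q r x + 2 * r x * along (a_dp j) q r x"
    by (simp add: abc_Suc along_def jet_def)
  ultimately show ?thesis by simp
qed

definition Pabc :: "nat \<Rightarrow> bool" where
  "Pabc j \<longleftrightarrow> diffpoly (a_dp j) \<and> diffpoly (b_dp j) \<and> diffpoly (c_dp j) \<and>
    (0 < j \<longrightarrow> a_dp j (\<lambda>_. 0) (\<lambda>_. 0) = 0 \<and> b_dp j (\<lambda>_. 0) (\<lambda>_. 0) = 0 \<and> c_dp j (\<lambda>_. 0) (\<lambda>_. 0) = 0) \<and>
    (\<forall>q r x. smooth q \<longrightarrow> smooth r \<longrightarrow>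
       (along (a_dp j) q r has_real_derivative (q x * along (c_dp j) q r x - r x * along (b_dp j) q r x)) (at x)) \<and>
    (0 < j \<longrightarrow> a_dp j = (\<lambda>Q R. 1/2 * (\<Sum>i=1..j-1. a_dp i Q R * a_dp (j-i) Q R + b_dp i Q R * c_dp (j-i) Q R)))"

lemma Pabc_0: "Pabc 0"
  unfolding Pabc_def abc_0 by (auto intro: diffpoly.intros simp: along_fun)

lemma Pabc_Suc:
  assumes IH: "\<And>j. j \<le> m \<Longrightarrow> Pabc j"
  shows "Pabc (Suc m)"
proof -
  note P = IH[unfolded Pabc_def]
  have dA: "diffpoly (a_dp j)" "diffpoly (b_dp j)" "diffpoly (c_dp j)" if "j \<le> m" for j
    using P[OF that] by blast+
  have z: "a_dp j (\<lambda>_. 0) (\<lambda>_. 0) = 0" "b_dp j (\<lambda>_. 0) (\<lambda>_. 0) = 0" "c_dp j (\<lambda>_. 0) (\<lambda>_. 0) = 0"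
    if "j \<le> m" "0 < j" for j
    using P[OF that(1)] that(2) by blast+
  have ad: "(along (a_dp j) q r has_real_derivative (q x * along (c_dp j) q r x - r x * along (b_dp j) q r x)) (at x)"
    if "j \<le> m" "smooth q" "smooth r" for j q r x
    using P[OF that(1)] that(2,3) by blast
  have DB: "diffpoly (Dx (b_dp m))" "Dx (b_dp m) (\<lambda>_. 0) (\<lambda>_. 0) = 0"
    using Dx_char[OF dA(2)] by auto
  have DC: "diffpoly (Dx (c_dp m))" "Dx (c_dp m) (\<lambda>_. 0) (\<lambda>_. 0) = 0"
    using Dx_char[OF dA(3)] by auto
  have dBs: "diffpoly (b_dp (Suc m))"
    unfolding abc_Suc by (intro dp_diff dp_cmult dp_mult dp_q DB dA) simp
  have dCs: "diffpoly (c_dp (Suc m))"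
    unfolding abc_Suc by (intro dp_diff dp_cmult dp_mult dp_r DC dA) simp
  have zB: "b_dp (Suc m) (\<lambda>_. 0) (\<lambda>_. 0) = 0" "c_dp (Suc m) (\<lambda>_. 0) (\<lambda>_. 0) = 0"
    unfolding abc_Suc using DB DC by simp_all
  define Ws where "Ws = (\<lambda>Q R. \<Sum>i=1..m. a_dp i Q R * a_dp (Suc m - i) Q R + b_dp i Q R * c_dp (Suc m - i) Q R)"
  define Zi where "Zi = (\<lambda>Q R. Q 0 * Dx (c_dp m) Q R + R 0 * Dx (b_dp m) Q R)"
  have dWs: "diffpoly Ws"
    unfolding Ws_def by (intro dp_sum dp_add dp_mult dA) auto
  have zWs: "Ws (\<lambda>_. 0) (\<lambda>_. 0) = 0"
    unfolding Ws_def using z by (intro sum.neutral) auto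
  have derWs: "(along Ws q r has_real_derivative along Zi q r x) (at x)" if sq: "smooth q" "smooth r" for q r x
  proof -
    define al where "al j = along (a_dp j) q r x" for j
    define be where "be j = along (b_dp j) q r x" for j
    define ga where "ga j = along (c_dp j) q r x" for j
    have LSq: "LS q x" "LS r x" using sq smooth_LS by auto
    have bd: "(along (b_dp j) q r has_real_derivative (-2 * be (Suc j) - 2 * q x * al j)) (at x)" if "j \<le> m" for j
      unfolding al_def be_def using bder[OF dA(2)[OF that] LSq] .
    have cd: "(along (c_dp j) q r has_real_derivative (2 * ga (Suc j) + 2 * r x * al j)) (at x)" if "j \<le> m" for j
      unfolding al_def ga_def using cder[OF dA(3)[OF that] LSq] .
    have add: "(along (a_dp j) q r has_real_derivative (q x * ga j - r x * be j)) (at x)" if "j \<le> m" for j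
      unfolding ga_def be_def using ad[OF that sq] .
    have "((\<lambda>y. \<Sum>i=1..m. along (a_dp i) q r y * along (a_dp (Suc m - i)) q r y + along (b_dp i) q r y * along (c_dp (Suc m - i)) q r y)
      has_real_derivative (\<Sum>i=1..m. (q x * ga i - r x * be i) * al (Suc m - i) + al i * (q x * ga (Suc m - i) - r x * be (Suc m - i))
        + (-2 * be (Suc i) - 2 * q x * al i) * ga (Suc m - i) + be i * (2 * ga (Suc (Suc m - i)) + 2 * r x * al (Suc m - i)))) (at x)"
    proof (rule DERIV_sum)
      fix i assume i: "i \<in> {1..m}"
      then have i1: "i \<le> m" and i2: "Suc m - i \<le> m" by auto
      have e: "Suc (Suc m - i) = Suc (Suc m - i)" by simp
      show "((\<lambda>y. along (a_dp i) q r y * along (a_dp (Suc m - i)) q r y + along (b_dp i) q r y * along (c_dp (Suc m - i)) q r y)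
        has_real_derivative (q x * ga i - r x * be i) * al (Suc m - i) + al i * (q x * ga (Suc m - i) - r x * be (Suc m - i))
        + (-2 * be (Suc i) - 2 * q x * al i) * ga (Suc m - i) + be i * (2 * ga (Suc (Suc m - i)) + 2 * r x * al (Suc m - i))) (at x)"
        using DERIV_add[OF DERIV_mult'[OF add[OF i1] add[OF i2]] DERIV_mult'[OF bd[OF i1] cd[OF i2]]]
        unfolding al_def be_def ga_def by (rule DERIV_cong) (simp add: algebra_simps)
    qed
    moreover have "(\<Sum>i=1..m. (q x * ga i - r x * be i) * al (Suc m - i) + al i * (q x * ga (Suc m - i) - r x * be (Suc m - i))
        + (-2 * be (Suc i) - 2 * q x * al i) * ga (Suc m - i) + be i * (2 * ga (Suc (Suc m - i)) + 2 * r x * al (Suc m - i)))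
       = 2 * (q x * ga (Suc m) - r x * be (Suc m))"
      by (rule telesc) (simp_all add: be_def ga_def bc_1[simplified] along_q0)
    moreover have "along Zi q r x = 2 * (q x * ga (Suc m) - r x * be (Suc m))"
    proof -
      have h1: "along (Dx (b_dp m)) q r x = -2 * be (Suc m) - 2 * q x * al m"
        by (simp add: abc_Suc along_def jet_def be_def al_def)
      have h2: "along (Dx (c_dp m)) q r x = 2 * ga (Suc m) + 2 * r x * al m"
        by (simp add: abc_Suc along_def jet_def ga_def al_def)
      have h3: "along Zi q r x = q x * along (Dx (c_dp m)) q r x + r x * along (Dx (b_dp m)) q r x"
        by (simp add: Zi_def along_def jet_def)
      show ?thesis unfolding h3 h1 h2 by (simp add: algebra_simps)
    qed
    ultimately show ?thesis by (simp add: Ws_def along_fun)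
  qed
  have DI: "Dinv Zi = Ws" by (rule Dinv_char[OF dWs zWs derWs])
  have aS: "a_dp (Suc m) = (\<lambda>Q R. 1/2 * Ws Q R)"
    by (simp add: abc_Suc(1) DI[unfolded Zi_def])
  show ?thesis
    unfolding Pabc_def
  proof (intro conjI impI allI)
    show "diffpoly (a_dp (Suc m))" unfolding aS by (intro dp_cmult dWs)
    show "a_dp (Suc m) (\<lambda>_. 0) (\<lambda>_. 0) = 0" unfolding aS using zWs by simp
    show "a_dp (Suc m) = (\<lambda>Q R. 1/2 * (\<Sum>i=1..Suc m-1. a_dp i Q R * a_dp (Suc m-i) Q R + b_dp i Q R * c_dp (Suc m-i) Q R))"
      unfolding aS Ws_def by simp
    fix q r x assume sq: "smooth q" "smooth r"
    have "((\<lambda>y. 1/2 * along Ws q r y) has_real_derivative 1/2 * along Zi q r x) (at x)"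
      by (intro DERIV_cmult derWs sq)
    moreover have "along Zi q r x = 2 * (q x * along (c_dp (Suc m)) q r x - r x * along (b_dp (Suc m)) q r x)"
    proof -
      have h1: "along (Dx (b_dp m)) q r x = -2 * along (b_dp (Suc m)) q r x - 2 * q x * along (a_dp m) q r x"
        by (simp add: abc_Suc along_def jet_def)
      have h2: "along (Dx (c_dp m)) q r x = 2 * along (c_dp (Suc m)) q r x + 2 * r x * along (a_dp m) q r x"
        by (simp add: abc_Suc along_def jet_def)
      have h3: "along Zi q r x = q x * along (Dx (c_dp m)) q r x + r x * along (Dx (b_dp m)) q r x"
        by (simp add: Zi_def along_def jet_def)
      show ?thesis unfolding h3 h1 h2 by (simp add: algebra_simps)
    qed
    ultimately show "(along (a_dp (Suc m)) q r has_real_derivative q x * along (c_dp (Suc m)) q r x - r x * along (b_dp (Suc m)) q r x) (at x)"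
      unfolding aS by (simp add: along_fun)
  qed (use dBs dCs zB in auto)
qed

lemma Pabc_all: "Pabc m"
proof (induction m rule: less_induct)
  case (less m)
  show ?case
  proof (cases m)
    case 0 then show ?thesis using Pabc_0 by simp
  next
    case (Suc k) then show ?thesis using less Pabc_Suc[of k] by auto
  qed
qed


definition Sl :: "nat \<Rightarrow> nat \<Rightarrow> nat list set" where
  "Sl n m = {is. length is = n \<and> (\<forall>i\<in>set is. 1 \<le> i) \<and> sum_list is = m}"

lemma finite_Sl: "finite (Sl n m)"
proof (rule finite_subset)
  show "Sl n m \<subseteq> {xs. set xs \<subseteq> {0..m} \<and> length xs = n}"
    unfolding Sl_def using member_le_sum_list by fastforce
  show "finite {xs. set xs \<subseteq> {0..m::nat} \<and> length xs = n}"
    by (rule finite_lists_length_eq) simp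
qed

lemma Sl_0: "Sl 0 m = (if m = 0 then {[]} else {})"
  by (auto simp: Sl_def)

lemma Sl_Suc: "Sl (Suc n) m = (\<lambda>(k, is). k # is) ` (SIGMA k:{1..m}. Sl n (m - k))"
proof (rule set_eqI)
  fix xs
  show "xs \<in> Sl (Suc n) m \<longleftrightarrow> xs \<in> (\<lambda>(k, is). k # is) ` (SIGMA k:{1..m}. Sl n (m - k))"
  proof
    assume "xs \<in> Sl (Suc n) m"
    then obtain k ys where xs: "xs = k # ys" and h: "length ys = n" "1 \<le> k" "\<forall>i\<in>set ys. 1 \<le> i" "k + sum_list ys = m"
      unfolding Sl_def by (cases xs) auto
    then have "(k, ys) \<in> (SIGMA k:{1..m}. Sl n (m - k))" by (auto simp: Sl_def)
    then show "xs \<in> (\<lambda>(k, is). k # is) ` (SIGMA k:{1..m}. Sl n (m - k))" using xs by force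
  next
    assume "xs \<in> (\<lambda>(k, is). k # is) ` (SIGMA k:{1..m}. Sl n (m - k))"
    then show "xs \<in> Sl (Suc n) m" by (auto simp: Sl_def)
  qed
qed

lemma fps_pow_lists:
  fixes f :: "real fps"
  assumes f0: "f $ 0 = 0"
  shows "(f ^ n) $ m = (\<Sum>is\<in>Sl n m. prod_list (map (\<lambda>k. f $ k) is))"
proof (induction n arbitrary: m)
  case 0 then show ?case by (simp add: Sl_0)
next
  case (Suc n)
  have "(f ^ Suc n) $ m = (\<Sum>k=0..m. f $ k * (f ^ n) $ (m - k))"
    by (simp add: fps_mult_nth)
  also have "\<dots> = (\<Sum>k=1..m. f $ k * (f ^ n) $ (m - k))"
    using f0 by (simp add: sum.atLeast_Suc_atMost)
  also have "\<dots> = (\<Sum>k=1..m. \<Sum>is\<in>Sl n (m - k). prod_list (map (\<lambda>k. f $ k) (k # is)))"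
    by (simp add: Suc sum_distrib_left)
  also have "\<dots> = (\<Sum>(k, is)\<in>(SIGMA k:{1..m}. Sl n (m - k)). prod_list (map (\<lambda>k. f $ k) (k # is)))"
    by (rule sum.Sigma) (auto simp: finite_Sl)
  also have "\<dots> = (\<Sum>is\<in>Sl (Suc n) m. prod_list (map (\<lambda>k. f $ k) is))"
    unfolding Sl_Suc by (subst sum.reindex) (auto simp: inj_on_def case_prod_beta)
  finally show ?case .
qed

lemma fps_two_mult_nth: "((2::real fps) * f) $ n = 2 * f $ n"
  by (metis fps_mult_left_const_nth numeral_fps_const)

definition Ef :: "real fps" where "Ef = 1 + Abs_fps dn"

lemma dn_conv: "1 \<le> n \<Longrightarrow> (\<Sum>i=0..n. dn i * dn (n - i)) = (\<Sum>i=1..n-1. dn i * dn (n - i))"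
proof -
  assume n: "1 \<le> n"
  have "(\<Sum>i=0..n. dn i * dn (n - i)) = (\<Sum>i=1..n. dn i * dn (n - i))"
    by (simp add: sum.atLeast_Suc_atMost)
  also have "\<dots> = (\<Sum>i=1..n-1. dn i * dn (n - i)) + dn n * dn 0"
    using n by (cases n) (auto simp: sum.cl_ivl_Suc)
  finally show ?thesis by simp
qed

lemma Ef_eq: "Ef ^ 2 * (1 + fps_const (1/4) * fps_X) = 1"
proof -
  define D where "D = Abs_fps dn"
  define S where "S = 1 + 2 * D + D * D"
  have D0: "D $ 0 = 0" by (simp add: D_def)
  have E: "Ef ^ 2 * (1 + fps_const (1/4) * fps_X) = S + fps_const (1/4) * (fps_X * S)"
    by (simp add: Ef_def D_def S_def algebra_simps power2_eq_square)
  have coef: "(S + fps_const (1/4) * (fps_X * S)) $ n = S $ n + (if n = 0 then 0 else (1/4) * S $ (n - 1))" for n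
    by simp
  have c: "S $ n = (if n = 0 then 1 else 2 * dn n + (\<Sum>i=1..n-1. dn i * dn (n - i)))" for n
  proof (cases "n = 0")
    case True then show ?thesis by (simp add: S_def D_def fps_mult_nth fps_two_mult_nth)
  next
    case False
    then show ?thesis using dn_conv[of n]
      by (simp add: S_def D_def fps_two_mult_nth fps_mult_nth[of "Abs_fps dn" "Abs_fps dn"])
  qed
  show ?thesis
  proof (rule fps_ext)
    fix n
    have "S $ n + (if n = 0 then 0 else (1/4) * S $ (n - 1)) = (1 :: real fps) $ n"
    proof (cases n)
      case 0 then show ?thesis by (simp add: c)
    next
      case (Suc k)
      note nk = Suc
      show ?thesis
      proof (cases k)
        case 0 then show ?thesis using nk by (simp add: c)
      next
        case (Suc l)
        note kl = Suc
        show ?thesis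
        proof (cases l)
          case 0 then show ?thesis using nk kl by (simp add: c)
        next
          case (Suc p)
          define nn where "nn = Suc (Suc (Suc p))"
          have nnn: "n = nn" using nk kl Suc nn_def by simp
          have nz: "nn \<noteq> 0" "nn - 1 \<noteq> 0" by (simp_all add: nn_def)
          have h1: "S $ nn = 2 * dn nn + (\<Sum>i=1..nn-1. dn i * dn (nn - i))"
            using c[of nn] nz by simp
          have h2: "S $ (nn - 1) = 2 * dn (nn - 1) + (\<Sum>i=1..nn-1-1. dn i * dn (nn - 1 - i))"
            using c[of "nn - 1"] nz by simp
          have e: "(\<Sum>i=1..nn-1-1. dn i * dn (nn - 1 - i)) = (\<Sum>i\<in>{1..nn-2}. dn i * dn (nn - i - 1))"
            by (intro sum.cong) (auto simp: diff_commute)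
          have dn_eq: "dn nn = -(1/2) * (\<Sum>i\<in>{1..nn-1}. dn i * dn (nn-i)) - (1/4) * dn (nn-1)
             - (1/8) * (\<Sum>i\<in>{1..nn-2}. dn i * dn (nn-i-1))"
            by (simp only: nn_def dn.simps(4) Let_def)
          have "S $ nn + (1/4) * S $ (nn - 1) = 0"
            using h1 h2 e dn_eq by linarith
          then show ?thesis using nnn nz by simp
        qed
      qed
    qed
    then show "(Ef ^ 2 * (1 + fps_const (1/4) * fps_X)) $ n = (1 :: real fps) $ n"
      unfolding E coef .
  qed
qed

lemma compose_coeff:
  fixes f :: "real fps"
  assumes "f $ 0 = 0"
  shows "(Ef oo f) $ m = (if m = 0 then 1 else (\<Sum>n=1..m. dn n * (f ^ n) $ m))"
proof (cases "m = 0")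
  case True then show ?thesis by (simp add: Ef_def)
next
  case False
  have "(Ef oo f) $ m = (\<Sum>i=0..m. Ef $ i * (f ^ i) $ m)" by (simp add: fps_compose_nth)
  also have "\<dots> = (\<Sum>i=1..m. Ef $ i * (f ^ i) $ m)"
    using False by (simp add: sum.atLeast_Suc_atMost)
  also have "\<dots> = (\<Sum>i=1..m. dn i * (f ^ i) $ m)"
    by (intro sum.cong) (auto simp: Ef_def)
  finally show ?thesis using False by simp
qed

lemma I_sq:
  fixes f :: "real fps"
  assumes f0: "f $ 0 = 0"
  shows "(Ef oo f) ^ 2 * (1 + fps_const (1/4) * f) = 1"
proof -
  have "(Ef ^ 2 * (1 + fps_const (1/4) * fps_X)) oo f = 1 oo f" by (simp add: Ef_eq)
  moreover have "1 oo f = 1" using fps_const_compose[of 1 f] by simp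
  moreover have "(Ef ^ 2 * (1 + fps_const (1/4) * fps_X)) oo f = (Ef oo f) ^ 2 * (1 + fps_const (1/4) * f)"
  proof -
    have "(Ef ^ 2 * (1 + fps_const (1/4) * fps_X)) oo f = (Ef ^ 2 oo f) * ((1 + fps_const (1/4) * fps_X) oo f)"
      by (rule fps_compose_mult_distrib[OF f0])
    also have "Ef ^ 2 oo f = (Ef oo f) ^ 2"
      unfolding power2_eq_square by (rule fps_compose_mult_distrib[OF f0])
    also have "(1 + fps_const (1/4) * fps_X) oo f = (1 oo f) + ((fps_const (1/4) oo f) * (fps_X oo f))"
      by (simp add: fps_compose_add_distrib fps_compose_mult_distrib[OF f0])
    also have "\<dots> = 1 + fps_const (1/4) * f"
      using fps_const_compose[of 1 f] f0 by simp
    finally show ?thesis .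
  qed
  ultimately show ?thesis by simp
qed

definition fder :: "(real \<Rightarrow> real fps) \<Rightarrow> real fps \<Rightarrow> real \<Rightarrow> bool" where
  "fder A A' x \<longleftrightarrow> (\<forall>k. ((\<lambda>z. A z $ k) has_real_derivative A' $ k) (at x))"

lemma fder_add: "fder A A' x \<Longrightarrow> fder B B' x \<Longrightarrow> fder (\<lambda>z. A z + B z) (A' + B') x"
  unfolding fder_def by (auto intro: DERIV_add)

lemma fder_diff: "fder A A' x \<Longrightarrow> fder B B' x \<Longrightarrow> fder (\<lambda>z. A z - B z) (A' - B') x"
  unfolding fder_def by (auto intro: DERIV_diff)

lemma fder_uminus: "fder A A' x \<Longrightarrow> fder (\<lambda>z. - A z) (- A') x"
  unfolding fder_def by (auto intro: DERIV_minus)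

lemma fder_const: "fder (\<lambda>z. C) 0 x"
  unfolding fder_def by simp

lemma fder_mult:
  assumes "fder A A' x" "fder B B' x"
  shows "fder (\<lambda>z. A z * B z) (A' * B x + A x * B') x"
  unfolding fder_def
proof
  fix k
  have "((\<lambda>z. \<Sum>i=0..k. A z $ i * B z $ (k - i)) has_real_derivative
      (\<Sum>i=0..k. A' $ i * B x $ (k - i) + A x $ i * B' $ (k - i))) (at x)"
  proof (rule DERIV_sum)
    fix i
    show "((\<lambda>z. A z $ i * B z $ (k - i)) has_real_derivative A' $ i * B x $ (k - i) + A x $ i * B' $ (k - i)) (at x)"
    proof -
      have "((\<lambda>z. A z $ i) has_real_derivative A' $ i) (at x)" "((\<lambda>z. B z $ (k - i)) has_real_derivative B' $ (k - i)) (at x)"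
        using assms unfolding fder_def by blast+
      from DERIV_mult'[OF this] show ?thesis by (simp add: algebra_simps)
    qed
  qed
  then show "((\<lambda>z. (A z * B z) $ k) has_real_derivative (A' * B x + A x * B') $ k) (at x)"
    by (simp add: fps_mult_nth sum.distrib)
qed

lemma fder_power:
  assumes "fder A 0 x"
  shows "fder (\<lambda>z. A z ^ n) 0 x"
proof (induction n)
  case 0 then show ?case using fder_const[of 1 x] by simp
next
  case (Suc n)
  show ?case using fder_mult[OF assms Suc] by simp
qed


lemma Fcons_alg:
  fixes X G H K Hd Kd c d :: "real fps"
  assumes "X*Hd = -((2*c) * (X*G)) - 2*(H - c)" "X*Kd = (2*d)*(X*G) + 2*(K - d)"
  shows "4 * (X^2 * (((2*c)*K - (2*d)*H)*G + G*((2*c)*K - (2*d)*H) + 2*(Hd*K + H*Kd))) - 8*(X*((2*c)*K - (2*d)*H)) = 0"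
  using assms by algebra

lemma B_alg:
  fixes X G H I Hd c s h :: "real fps"
  assumes "X*Hd = -((2*c) * (X*G)) - 2*(H - c)" "h * 2 = 1"
  shows "X * (s * (I * H)) = X * ((-h) * (X * (s * (I * Hd))) - (s*c) * (- I + X * (I * G)))"
  using assms by algebra

lemma A_alg:
  fixes X G H K I F s q :: "real fps"
  assumes "I^2 * (1 + q * F) = 1" "q * 4 = 1" "s * s = 2" "F = 4 * (X^2 * (G * G + 2 * (H * K))) - 8 * (X * G)"
  shows "(- I + X * (I * G))^2 + (X * (s * (I * H))) * (X * (s * (I * K))) = 1"
  using assms by algebra

lemma ip_plus: "ip lam mu N P Q k a b + ip lam mu N P Q k c d = (\<Sum>j=1..N. lam j ^ k * mu j * (P a j * Q b j + P c j * Q d j))"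
  unfolding ip_def sum.distrib[symmetric] by (rule sum.cong) (auto simp: algebra_simps)

lemma ip_minus: "ip lam mu N P Q k a b - ip lam mu N P Q k c d = (\<Sum>j=1..N. lam j ^ k * mu j * (P a j * Q b j - P c j * Q d j))"
  unfolding ip_def sum_subtractf[symmetric] by (rule sum.cong) (auto simp: algebra_simps)

locale sol =
  fixes N :: nat and lam mu :: "nat \<Rightarrow> real"
    and \<phi> \<psi> :: "nat \<Rightarrow> nat \<Rightarrow> real \<Rightarrow> real"
    and J :: "real set"
    and qt rt :: "real \<Rightarrow> real"
  assumes J: "open J"
    and qt: "\<And>x. qt x = sqrt 2 * (ip lam mu N (\<lambda>i j. \<phi> i j x) (\<lambda>i j. \<psi> i j x) 0 1 2
                                  + ip lam mu N (\<lambda>i j. \<phi> i j x) (\<lambda>i j. \<psi> i j x) 0 2 3)"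
    and rt: "\<And>x. rt x = sqrt 2 * (ip lam mu N (\<lambda>i j. \<phi> i j x) (\<lambda>i j. \<psi> i j x) 0 2 1
                                  + ip lam mu N (\<lambda>i j. \<phi> i j x) (\<lambda>i j. \<psi> i j x) 0 3 2)"
    and ode_phi1: "\<And>j x. j \<in> {1..N} \<Longrightarrow> x \<in> J \<Longrightarrow>
       (\<phi> 1 j has_real_derivative (-2 * lam j * \<phi> 1 j x + sqrt 2 * qt x * \<phi> 2 j x)) (at x)"
    and ode_phi2: "\<And>j x. j \<in> {1..N} \<Longrightarrow> x \<in> J \<Longrightarrow>
       (\<phi> 2 j has_real_derivative (sqrt 2 * rt x * \<phi> 1 j x + sqrt 2 * qt x * \<phi> 3 j x)) (at x)"
    and ode_phi3: "\<And>j x. j \<in> {1..N} \<Longrightarrow> x \<in> J \<Longrightarrow>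
       (\<phi> 3 j has_real_derivative (sqrt 2 * rt x * \<phi> 2 j x + 2 * lam j * \<phi> 3 j x)) (at x)"
    and ode_psi1: "\<And>j x. j \<in> {1..N} \<Longrightarrow> x \<in> J \<Longrightarrow>
       (\<psi> 1 j has_real_derivative (2 * lam j * \<psi> 1 j x - sqrt 2 * rt x * \<psi> 2 j x)) (at x)"
    and ode_psi2: "\<And>j x. j \<in> {1..N} \<Longrightarrow> x \<in> J \<Longrightarrow>
       (\<psi> 2 j has_real_derivative (- sqrt 2 * qt x * \<psi> 1 j x - sqrt 2 * rt x * \<psi> 3 j x)) (at x)"
    and ode_psi3: "\<And>j x. j \<in> {1..N} \<Longrightarrow> x \<in> J \<Longrightarrow>
       (\<psi> 3 j has_real_derivative (- sqrt 2 * qt x * \<psi> 2 j x - 2 * lam j * \<psi> 3 j x)) (at x)"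
begin

lemma bexI': "x \<in> A \<Longrightarrow> P x \<Longrightarrow> \<exists>x\<in>A. P x" by blast

inductive_set alg :: "(real \<Rightarrow> real) set" where
  alg_const: "(\<lambda>x. c) \<in> alg"
| alg_phi: "j \<in> {1..N} \<Longrightarrow> i \<in> {1,2,3} \<Longrightarrow> \<phi> i j \<in> alg"
| alg_psi: "j \<in> {1..N} \<Longrightarrow> i \<in> {1,2,3} \<Longrightarrow> \<psi> i j \<in> alg"
| alg_add: "f \<in> alg \<Longrightarrow> g \<in> alg \<Longrightarrow> (\<lambda>x. f x + g x) \<in> alg"
| alg_mult: "f \<in> alg \<Longrightarrow> g \<in> alg \<Longrightarrow> (\<lambda>x. f x * g x) \<in> alg"

lemma alg_sum: "finite S \<Longrightarrow> (\<And>j. j \<in> S \<Longrightarrow> f j \<in> alg) \<Longrightarrow> (\<lambda>x. \<Sum>j\<in>S. f j x) \<in> alg"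
proof (induction S rule: finite_induct)
  case empty then show ?case using alg_const[of 0] by simp
next
  case (insert a S)
  then have "(\<lambda>x. f a x + (\<lambda>x. \<Sum>j\<in>S. f j x) x) \<in> alg" by (intro alg_add) auto
  then show ?case using insert by simp
qed

lemma qt_alg: "qt \<in> alg"
proof -
  have "qt = (\<lambda>x. sqrt 2 * ((\<Sum>j\<in>{1..N}. (lam j ^ 0 * \<phi> 1 j x) * (mu j * \<psi> 2 j x))
                        + (\<Sum>j\<in>{1..N}. (lam j ^ 0 * \<phi> 2 j x) * (mu j * \<psi> 3 j x))))"
    by (rule ext) (simp only: qt ip_def)
  also have "\<dots> \<in> alg"
    by (intro alg_mult alg_add alg_const alg_sum alg_phi alg_psi) auto
  finally show ?thesis .
qed

lemma rt_alg: "rt \<in> alg"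
proof -
  have "rt = (\<lambda>x. sqrt 2 * ((\<Sum>j\<in>{1..N}. (lam j ^ 0 * \<phi> 2 j x) * (mu j * \<psi> 1 j x))
                        + (\<Sum>j\<in>{1..N}. (lam j ^ 0 * \<phi> 3 j x) * (mu j * \<psi> 2 j x))))"
    by (rule ext) (simp only: rt ip_def)
  also have "\<dots> \<in> alg"
    by (intro alg_mult alg_add alg_const alg_sum alg_phi alg_psi) auto
  finally show ?thesis .
qed

lemma alg_deriv: "f \<in> alg \<Longrightarrow> \<exists>g\<in>alg. \<forall>x\<in>J. (f has_real_derivative g x) (at x)"
proof (induction rule: alg.induct)
  case (alg_const c)
  show ?case by (intro bexI[of _ "\<lambda>x. 0"] alg.intros) auto
next
  case (alg_phi j i)
  then consider "i = 1" | "i = 2" | "i = 3" by auto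
  then show ?case
  proof cases
    case 1
    show ?thesis
      apply (rule bexI'[of "\<lambda>x. -2 * lam j * \<phi> 1 j x + sqrt 2 * qt x * \<phi> 2 j x"])
       apply (intro alg_add alg_mult alg_const alg_phi alg_psi qt_alg)
       using 1 alg_phi ode_phi1 by (auto intro: alg.intros)
  next
    case 2
    show ?thesis
      apply (rule bexI'[of "\<lambda>x. sqrt 2 * rt x * \<phi> 1 j x + sqrt 2 * qt x * \<phi> 3 j x"])
       apply (intro alg_add alg_mult alg_const alg_phi alg_psi qt_alg rt_alg)
       using 2 alg_phi ode_phi2 by (auto intro: alg.intros)
  next
    case 3
    show ?thesis
      apply (rule bexI'[of "\<lambda>x. sqrt 2 * rt x * \<phi> 2 j x + 2 * lam j * \<phi> 3 j x"])
       apply (intro alg_add alg_mult alg_const alg_phi alg_psi rt_alg)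
       using 3 alg_phi ode_phi3 by (auto intro: alg.intros)
  qed
next
  case (alg_psi j i)
  then consider "i = 1" | "i = 2" | "i = 3" by auto
  then show ?case
  proof cases
    case 1
    show ?thesis
      apply (rule bexI'[of "\<lambda>x. 2 * lam j * \<psi> 1 j x + (- sqrt 2 * rt x) * \<psi> 2 j x"])
       apply (intro alg_add alg_mult alg_const alg_phi alg_psi rt_alg)
       using 1 alg_psi ode_psi1 by (auto intro: alg.intros)
  next
    case 2
    show ?thesis
      apply (rule bexI'[of "\<lambda>x. - sqrt 2 * qt x * \<psi> 1 j x + (- sqrt 2 * rt x) * \<psi> 3 j x"])
       apply (intro alg_add alg_mult alg_const alg_phi alg_psi qt_alg rt_alg)
       using 2 alg_psi ode_psi2 by (auto intro: alg.intros)
  next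
    case 3
    show ?thesis
      apply (rule bexI'[of "\<lambda>x. - sqrt 2 * qt x * \<psi> 2 j x + (- 2 * lam j) * \<psi> 3 j x"])
       apply (intro alg_add alg_mult alg_const alg_phi alg_psi qt_alg)
       using 3 alg_psi ode_psi3 by (auto intro: alg.intros)
  qed
next
  case (alg_add f g)
  then obtain f' g' where "f' \<in> alg" "\<forall>x\<in>J. (f has_real_derivative f' x) (at x)"
    "g' \<in> alg" "\<forall>x\<in>J. (g has_real_derivative g' x) (at x)" by blast
  then show ?case
    by (intro bexI[of _ "\<lambda>x. f' x + g' x"]) (auto intro: DERIV_add alg.intros)
next
  case (alg_mult f g)
  then obtain f' g' where "f' \<in> alg" "\<forall>x\<in>J. (f has_real_derivative f' x) (at x)"
    "g' \<in> alg" "\<forall>x\<in>J. (g has_real_derivative g' x) (at x)" by blast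
  then show ?case using alg_mult.hyps
    by (intro bexI[of _ "\<lambda>x. f x * g' x + f' x * g x"]) (auto intro: DERIV_mult' alg.intros)
qed

lemma alg_higher: "f \<in> alg \<Longrightarrow> \<exists>h\<in>alg. \<forall>x\<in>J. (deriv ^^ k) f x = h x"
proof (induction k)
  case 0 then show ?case by auto
next
  case (Suc k)
  then obtain h where h: "h \<in> alg" "\<forall>x\<in>J. (deriv ^^ k) f x = h x" by blast
  obtain g where g: "g \<in> alg" "\<forall>x\<in>J. (h has_real_derivative g x) (at x)" using alg_deriv[OF h(1)] by blast
  have "(deriv ^^ Suc k) f x = g x" if x: "x \<in> J" for x
  proof -
    have "((deriv ^^ k) f has_real_derivative g x) (at x)"
      using has_field_derivative_transform_within_open[OF _ J x, of h "g x" "(deriv ^^ k) f"] g h x by auto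
    then show ?thesis by (simp add: DERIV_imp_deriv)
  qed
  then show ?case using g(1) by blast
qed

lemma alg_LS: "f \<in> alg \<Longrightarrow> x \<in> J \<Longrightarrow> LS f x"
  unfolding LS_def
proof
  fix k assume f: "f \<in> alg" and x: "x \<in> J"
  obtain h where h: "h \<in> alg" "\<forall>x\<in>J. (deriv ^^ k) f x = h x" using alg_higher[OF f] by blast
  obtain g where g: "g \<in> alg" "\<forall>x\<in>J. (h has_real_derivative g x) (at x)" using alg_deriv[OF h(1)] by blast
  have "((deriv ^^ k) f has_real_derivative g x) (at x)"
    using has_field_derivative_transform_within_open[OF _ J x, of h "g x" "(deriv ^^ k) f"] g h x by auto
  then show "(deriv ^^ k) f differentiable (at x)" using real_differentiable_def by blast
qed

lemma LS_qt: "x \<in> J \<Longrightarrow> LS qt x" and LS_rt: "x \<in> J \<Longrightarrow> LS rt x"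
  using alg_LS qt_alg rt_alg by auto

end

lemma sum_lin1: "a * (\<Sum>j\<in>S. f j) - b * (\<Sum>j\<in>S. g j) = (\<Sum>j\<in>S. a * f j - b * g j :: real)"
  by (simp add: sum_distrib_left sum_subtractf)
lemma sum_lin2: "a * (\<Sum>j\<in>S. f j) + b * (\<Sum>j\<in>S. g j) = (\<Sum>j\<in>S. a * f j + b * g j :: real)"
  by (simp add: sum_distrib_left sum.distrib)

context sol
begin

definition G :: "nat \<Rightarrow> real \<Rightarrow> real" where
  "G k x = ip lam mu N (\<lambda>i j. \<phi> i j x) (\<lambda>i j. \<psi> i j x) k 1 1 - ip lam mu N (\<lambda>i j. \<phi> i j x) (\<lambda>i j. \<psi> i j x) k 3 3"
definition H :: "nat \<Rightarrow> real \<Rightarrow> real" where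
  "H k x = ip lam mu N (\<lambda>i j. \<phi> i j x) (\<lambda>i j. \<psi> i j x) k 1 2 + ip lam mu N (\<lambda>i j. \<phi> i j x) (\<lambda>i j. \<psi> i j x) k 2 3"
definition K :: "nat \<Rightarrow> real \<Rightarrow> real" where
  "K k x = ip lam mu N (\<lambda>i j. \<phi> i j x) (\<lambda>i j. \<psi> i j x) k 2 1 + ip lam mu N (\<lambda>i j. \<phi> i j x) (\<lambda>i j. \<psi> i j x) k 3 2"

lemma G_sum: "G k x = (\<Sum>j=1..N. lam j ^ k * mu j * (\<phi> 1 j x * \<psi> 1 j x - \<phi> 3 j x * \<psi> 3 j x))"
  by (simp add: G_def ip_minus)
lemma H_sum: "H k x = (\<Sum>j=1..N. lam j ^ k * mu j * (\<phi> 1 j x * \<psi> 2 j x + \<phi> 2 j x * \<psi> 3 j x))"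
  by (simp add: H_def ip_plus)
lemma K_sum: "K k x = (\<Sum>j=1..N. lam j ^ k * mu j * (\<phi> 2 j x * \<psi> 1 j x + \<phi> 3 j x * \<psi> 2 j x))"
  by (simp add: K_def ip_plus)

lemma qt_H: "qt x = sqrt 2 * H 0 x" by (simp add: qt H_def)
lemma rt_K: "rt x = sqrt 2 * K 0 x" by (simp add: rt K_def)

lemma G_der:
  assumes x: "x \<in> J"
  shows "((\<lambda>y. G k y) has_real_derivative sqrt 2 * (qt x * K k x - rt x * H k x)) (at x)"
proof -
  have "((\<lambda>y. \<Sum>j=1..N. lam j ^ k * mu j * (\<phi> 1 j y * \<psi> 1 j y - \<phi> 3 j y * \<psi> 3 j y)) has_real_derivative
     (\<Sum>j=1..N. sqrt 2 * qt x * (lam j ^ k * mu j * (\<phi> 2 j x * \<psi> 1 j x + \<phi> 3 j x * \<psi> 2 j x))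
              - sqrt 2 * rt x * (lam j ^ k * mu j * (\<phi> 1 j x * \<psi> 2 j x + \<phi> 2 j x * \<psi> 3 j x)))) (at x)"
  proof (rule DERIV_sum)
    fix j assume j: "j \<in> {1..N}"
    show "((\<lambda>y. lam j ^ k * mu j * (\<phi> 1 j y * \<psi> 1 j y - \<phi> 3 j y * \<psi> 3 j y)) has_real_derivative
      sqrt 2 * qt x * (lam j ^ k * mu j * (\<phi> 2 j x * \<psi> 1 j x + \<phi> 3 j x * \<psi> 2 j x))
              - sqrt 2 * rt x * (lam j ^ k * mu j * (\<phi> 1 j x * \<psi> 2 j x + \<phi> 2 j x * \<psi> 3 j x))) (at x)"
      using DERIV_cmult[OF DERIV_diff[OF DERIV_mult'[OF ode_phi1[OF j x] ode_psi1[OF j x]] DERIV_mult'[OF ode_phi3[OF j x] ode_psi3[OF j x]]], of "lam j ^ k * mu j"]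
      by (rule DERIV_cong) (simp add: algebra_simps)
  qed
  moreover have "(\<lambda>y. G k y) = (\<lambda>y. \<Sum>j=1..N. lam j ^ k * mu j * (\<phi> 1 j y * \<psi> 1 j y - \<phi> 3 j y * \<psi> 3 j y))"
    by (simp add: G_sum)
  moreover have "sqrt 2 * (qt x * K k x - rt x * H k x) = (\<Sum>j=1..N. sqrt 2 * qt x * (lam j ^ k * mu j * (\<phi> 2 j x * \<psi> 1 j x + \<phi> 3 j x * \<psi> 2 j x))
              - sqrt 2 * rt x * (lam j ^ k * mu j * (\<phi> 1 j x * \<psi> 2 j x + \<phi> 2 j x * \<psi> 3 j x)))"
    unfolding K_sum H_sum sum_lin1[symmetric] by (simp add: algebra_simps)
  ultimately show ?thesis by simp
qed

lemma H_der:
  assumes x: "x \<in> J"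
  shows "((\<lambda>y. H k y) has_real_derivative - sqrt 2 * qt x * G k x - 2 * H (Suc k) x) (at x)"
proof -
  have "((\<lambda>y. \<Sum>j=1..N. lam j ^ k * mu j * (\<phi> 1 j y * \<psi> 2 j y + \<phi> 2 j y * \<psi> 3 j y)) has_real_derivative
     (\<Sum>j=1..N. (- sqrt 2 * qt x) * (lam j ^ k * mu j * (\<phi> 1 j x * \<psi> 1 j x - \<phi> 3 j x * \<psi> 3 j x))
              - 2 * (lam j ^ Suc k * mu j * (\<phi> 1 j x * \<psi> 2 j x + \<phi> 2 j x * \<psi> 3 j x)))) (at x)"
  proof (rule DERIV_sum)
    fix j assume j: "j \<in> {1..N}"
    show "((\<lambda>y. lam j ^ k * mu j * (\<phi> 1 j y * \<psi> 2 j y + \<phi> 2 j y * \<psi> 3 j y)) has_real_derivative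
      (- sqrt 2 * qt x) * (lam j ^ k * mu j * (\<phi> 1 j x * \<psi> 1 j x - \<phi> 3 j x * \<psi> 3 j x))
              - 2 * (lam j ^ Suc k * mu j * (\<phi> 1 j x * \<psi> 2 j x + \<phi> 2 j x * \<psi> 3 j x))) (at x)"
      using DERIV_cmult[OF DERIV_add[OF DERIV_mult'[OF ode_phi1[OF j x] ode_psi2[OF j x]] DERIV_mult'[OF ode_phi2[OF j x] ode_psi3[OF j x]]], of "lam j ^ k * mu j"]
      by (rule DERIV_cong) (simp add: algebra_simps)
  qed
  moreover have "(\<lambda>y. H k y) = (\<lambda>y. \<Sum>j=1..N. lam j ^ k * mu j * (\<phi> 1 j y * \<psi> 2 j y + \<phi> 2 j y * \<psi> 3 j y))"
    by (simp add: H_sum)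
  moreover have "- sqrt 2 * qt x * G k x - 2 * H (Suc k) x = (\<Sum>j=1..N. (- sqrt 2 * qt x) * (lam j ^ k * mu j * (\<phi> 1 j x * \<psi> 1 j x - \<phi> 3 j x * \<psi> 3 j x))
              - 2 * (lam j ^ Suc k * mu j * (\<phi> 1 j x * \<psi> 2 j x + \<phi> 2 j x * \<psi> 3 j x)))"
    unfolding G_sum H_sum sum_lin1[symmetric] by simp
  ultimately show ?thesis by simp
qed

lemma K_der:
  assumes x: "x \<in> J"
  shows "((\<lambda>y. K k y) has_real_derivative sqrt 2 * rt x * G k x + 2 * K (Suc k) x) (at x)"
proof -
  have "((\<lambda>y. \<Sum>j=1..N. lam j ^ k * mu j * (\<phi> 2 j y * \<psi> 1 j y + \<phi> 3 j y * \<psi> 2 j y)) has_real_derivative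
     (\<Sum>j=1..N. (sqrt 2 * rt x) * (lam j ^ k * mu j * (\<phi> 1 j x * \<psi> 1 j x - \<phi> 3 j x * \<psi> 3 j x))
              + 2 * (lam j ^ Suc k * mu j * (\<phi> 2 j x * \<psi> 1 j x + \<phi> 3 j x * \<psi> 2 j x)))) (at x)"
  proof (rule DERIV_sum)
    fix j assume j: "j \<in> {1..N}"
    show "((\<lambda>y. lam j ^ k * mu j * (\<phi> 2 j y * \<psi> 1 j y + \<phi> 3 j y * \<psi> 2 j y)) has_real_derivative
      (sqrt 2 * rt x) * (lam j ^ k * mu j * (\<phi> 1 j x * \<psi> 1 j x - \<phi> 3 j x * \<psi> 3 j x))
              + 2 * (lam j ^ Suc k * mu j * (\<phi> 2 j x * \<psi> 1 j x + \<phi> 3 j x * \<psi> 2 j x))) (at x)"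
      using DERIV_cmult[OF DERIV_add[OF DERIV_mult'[OF ode_phi2[OF j x] ode_psi1[OF j x]] DERIV_mult'[OF ode_phi3[OF j x] ode_psi2[OF j x]]], of "lam j ^ k * mu j"]
      by (rule DERIV_cong) (simp add: algebra_simps)
  qed
  moreover have "(\<lambda>y. K k y) = (\<lambda>y. \<Sum>j=1..N. lam j ^ k * mu j * (\<phi> 2 j y * \<psi> 1 j y + \<phi> 3 j y * \<psi> 2 j y))"
    by (simp add: K_sum)
  moreover have "sqrt 2 * rt x * G k x + 2 * K (Suc k) x = (\<Sum>j=1..N. (sqrt 2 * rt x) * (lam j ^ k * mu j * (\<phi> 1 j x * \<psi> 1 j x - \<phi> 3 j x * \<psi> 3 j x))
              + 2 * (lam j ^ Suc k * mu j * (\<phi> 2 j x * \<psi> 1 j x + \<phi> 3 j x * \<psi> 2 j x)))"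
    unfolding G_sum K_sum sum_lin2[symmetric] by simp
  ultimately show ?thesis by simp
qed

end

lemma fps_num_mult_nth: "((numeral w :: real fps) * f) $ n = numeral w * f $ n"
  by (metis fps_mult_left_const_nth numeral_fps_const)

lemma fder_cong: "fder A D x \<Longrightarrow> D = D' \<Longrightarrow> fder A D' x" by simp

context sol
begin

definition Gs :: "real \<Rightarrow> real fps" where "Gs x = Abs_fps (\<lambda>k. G k x)"
definition Hs :: "real \<Rightarrow> real fps" where "Hs x = Abs_fps (\<lambda>k. H k x)"
definition Ks :: "real \<Rightarrow> real fps" where "Ks x = Abs_fps (\<lambda>k. K k x)"
definition Fs :: "real \<Rightarrow> real fps" where
  "Fs x = 4 * (fps_X^2 * (Gs x * Gs x + 2 * (Hs x * Ks x))) - 8 * (fps_X * Gs x)"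
definition Iser :: "real \<Rightarrow> real fps" where "Iser x = Ef oo Fs x"

lemma Fs0: "Fs x $ 0 = 0"
  by (simp add: Fs_def fps_num_mult_nth fps_X_power_mult_nth)

lemma Fm_form: "m \<noteq> 1 \<Longrightarrow> Fm lam mu N (\<lambda>i j. \<phi> i j x) (\<lambda>i j. \<psi> i j x) m =
   4 * (\<Sum>i=1..m-1. G (i-1) x * G (m-i-1) x + 2 * H (i-1) x * K (m-i-1) x) - 8 * G (m-1) x"
  unfolding Fm_def Let_def G_def H_def K_def by simp

lemma Fm_eq: "1 \<le> m \<Longrightarrow> Fm lam mu N (\<lambda>i j. \<phi> i j x) (\<lambda>i j. \<psi> i j x) m = Fs x $ m"
proof -
  assume m: "1 \<le> m"
  show ?thesis
  proof (cases "m = 1")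
    case True
    then show ?thesis by (simp add: Fm_def Let_def G_def Fs_def fps_num_mult_nth fps_X_power_mult_nth Gs_def)
  next
    case False
    then obtain n where n: "m = Suc (Suc n)" using m by (cases m; cases "m - 1") auto
    have "Fs x $ m = 4 * (Gs x * Gs x + 2 * (Hs x * Ks x)) $ n - 8 * G (Suc n) x"
      by (simp add: n Fs_def fps_num_mult_nth fps_X_power_mult_nth Gs_def)
    also have "(Gs x * Gs x + 2 * (Hs x * Ks x)) $ n = (\<Sum>i=0..n. G i x * G (n - i) x + 2 * H i x * K (n - i) x)"
      unfolding fps_add_nth fps_num_mult_nth by (simp add: fps_mult_nth Gs_def Hs_def Ks_def sum.distrib sum_distrib_left mult.assoc)
    also have "\<dots> = (\<Sum>i=1..m-1. G (i-1) x * G (m-i-1) x + 2 * H (i-1) x * K (m-i-1) x)"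
    proof -
      have "(\<Sum>i=Suc 0..Suc n. G (i-1) x * G (Suc (Suc n)-i-1) x + 2 * H (i-1) x * K (Suc (Suc n)-i-1) x)
          = (\<Sum>i=0..n. G i x * G (n - i) x + 2 * H i x * K (n - i) x)"
        by (subst sum.shift_bounds_cl_Suc_ivl) simp
      then show ?thesis using n by simp
    qed
    finally show ?thesis using Fm_form[OF False] n by simp
  qed
qed

lemma Im_eq: "Im lam mu N (\<lambda>i j. \<phi> i j x) (\<lambda>i j. \<psi> i j x) m = Iser x $ m"
proof (cases "m = 0")
  case True then show ?thesis by (simp add: Im_def Iser_def compose_coeff Fs0 Ef_def)
next
  case False
  have "Iser x $ m = (\<Sum>n=1..m. dn n * (Fs x ^ n) $ m)"
    using False by (simp add: Iser_def compose_coeff Fs0)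
  also have "\<dots> = (\<Sum>n=1..m. dn n * (\<Sum>is\<in>{is. length is = n \<and> (\<forall>i\<in>set is. 1 \<le> i) \<and> sum_list is = m}.
            prod_list (map (Fm lam mu N (\<lambda>i j. \<phi> i j x) (\<lambda>i j. \<psi> i j x)) is)))"
  proof (intro sum.cong refl arg_cong2[where f="(*)"])
    fix n
    have "(Fs x ^ n) $ m = (\<Sum>is\<in>Sl n m. prod_list (map (\<lambda>k. Fs x $ k) is))"
      by (rule fps_pow_lists[OF Fs0])
    also have "\<dots> = (\<Sum>is\<in>Sl n m. prod_list (map (Fm lam mu N (\<lambda>i j. \<phi> i j x) (\<lambda>i j. \<psi> i j x)) is))"
    proof (rule sum.cong[OF refl])
      fix xs assume "xs \<in> Sl n m"
      then have "\<forall>i\<in>set xs. 1 \<le> i" by (simp add: Sl_def)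
      then show "prod_list (map (\<lambda>k. Fs x $ k) xs) = prod_list (map (Fm lam mu N (\<lambda>i j. \<phi> i j x) (\<lambda>i j. \<psi> i j x)) xs)"
        by (metis (mono_tags, lifting) Fm_eq map_eq_conv)
    qed
    finally show "(Fs x ^ n) $ m = (\<Sum>is\<in>{is. length is = n \<and> (\<forall>i\<in>set is. 1 \<le> i) \<and> sum_list is = m}.
            prod_list (map (Fm lam mu N (\<lambda>i j. \<phi> i j x) (\<lambda>i j. \<psi> i j x)) is))"
      by (simp add: Sl_def)
  qed
  finally show ?thesis using False by (simp add: Im_def)
qed

end

context sol
begin

definition Gd :: "real \<Rightarrow> real fps" where
  "Gd x = fps_const (sqrt 2 * qt x) * Ks x - fps_const (sqrt 2 * rt x) * Hs x"
definition Hd :: "real \<Rightarrow> real fps" where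
  "Hd x = Abs_fps (\<lambda>k. - sqrt 2 * qt x * G k x - 2 * H (Suc k) x)"
definition Kd :: "real \<Rightarrow> real fps" where
  "Kd x = Abs_fps (\<lambda>k. sqrt 2 * rt x * G k x + 2 * K (Suc k) x)"

lemma fder_G: "x \<in> J \<Longrightarrow> fder Gs (Gd x) x"
  unfolding fder_def
proof
  fix k assume x: "x \<in> J"
  show "((\<lambda>z. Gs z $ k) has_real_derivative Gd x $ k) (at x)"
    using G_der[OF x, of k] by (simp add: Gs_def Gd_def Hs_def Ks_def algebra_simps)
qed

lemma fder_H: "x \<in> J \<Longrightarrow> fder Hs (Hd x) x"
  unfolding fder_def
proof
  fix k assume x: "x \<in> J"
  show "((\<lambda>z. Hs z $ k) has_real_derivative Hd x $ k) (at x)"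
    using H_der[OF x, of k] by (simp add: Hs_def Hd_def)
qed

lemma fder_K: "x \<in> J \<Longrightarrow> fder Ks (Kd x) x"
  unfolding fder_def
proof
  fix k assume x: "x \<in> J"
  show "((\<lambda>z. Ks z $ k) has_real_derivative Kd x $ k) (at x)"
    using K_der[OF x, of k] by (simp add: Ks_def Kd_def)
qed

lemma sqrt2_qt: "fps_const (sqrt 2 * qt x) = 2 * fps_const (H 0 x)"
  by (simp add: qt_H numeral_fps_const)
lemma sqrt2_rt: "fps_const (sqrt 2 * rt x) = 2 * fps_const (K 0 x)"
  by (simp add: rt_K numeral_fps_const)

lemma XHd0: "fps_X * Hd x = - (fps_const (2 * H 0 x) * (fps_X * Gs x)) - 2 * (Hs x - fps_const (H 0 x))"
proof (rule fps_ext)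
  fix n
  show "(fps_X * Hd x) $ n = (- (fps_const (2 * H 0 x) * (fps_X * Gs x)) - 2 * (Hs x - fps_const (H 0 x))) $ n"
    unfolding fps_sub_nth fps_neg_nth fps_num_mult_nth fps_mult_left_const_nth
    using qt_H[of x] by (cases n) (simp_all add: Hd_def Hs_def Gs_def)
qed

lemma XKd0: "fps_X * Kd x = fps_const (2 * K 0 x) * (fps_X * Gs x) + 2 * (Ks x - fps_const (K 0 x))"
proof (rule fps_ext)
  fix n
  show "(fps_X * Kd x) $ n = (fps_const (2 * K 0 x) * (fps_X * Gs x) + 2 * (Ks x - fps_const (K 0 x))) $ n"
    unfolding fps_add_nth fps_num_mult_nth fps_mult_left_const_nth
    using rt_K[of x] by (cases n) (simp_all add: Kd_def Ks_def Gs_def)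
qed

lemma fc2: "fps_const (2 * c) = 2 * fps_const (c::real)"
  by (simp add: numeral_fps_const)

lemma XHd: "fps_X * Hd x = - ((2 * fps_const (H 0 x)) * (fps_X * Gs x)) - 2 * (Hs x - fps_const (H 0 x))"
  using XHd0 unfolding fc2 .
lemma XKd: "fps_X * Kd x = (2 * fps_const (K 0 x)) * (fps_X * Gs x) + 2 * (Ks x - fps_const (K 0 x))"
  using XKd0 unfolding fc2 .

lemma Fs_fun: "Fs = (\<lambda>z. 4 * (fps_X^2 * (Gs z * Gs z + 2 * (Hs z * Ks z))) - 8 * (fps_X * Gs z))"
  by (rule ext) (simp add: Fs_def)

lemma fder_F: assumes x: "x \<in> J" shows "fder Fs 0 x"
proof -
  have "fder (\<lambda>z. 4 * (fps_X^2 * (Gs z * Gs z + 2 * (Hs z * Ks z))) - 8 * (fps_X * Gs z))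
     ((0 * (fps_X^2 * (Gs x * Gs x + 2 * (Hs x * Ks x))) + 4 * (0 * (Gs x * Gs x + 2 * (Hs x * Ks x)) + fps_X^2 *
        ((Gd x * Gs x + Gs x * Gd x) + (0 * (Hs x * Ks x) + 2 * (Hd x * Ks x + Hs x * Kd x)))))
      - (0 * (fps_X * Gs x) + 8 * (0 * Gs x + fps_X * Gd x))) x"
    by (intro fder_diff fder_mult fder_add fder_const fder_G[OF x] fder_H[OF x] fder_K[OF x])
  moreover have "((0 * (fps_X^2 * (Gs x * Gs x + 2 * (Hs x * Ks x))) + 4 * (0 * (Gs x * Gs x + 2 * (Hs x * Ks x)) + fps_X^2 *
        ((Gd x * Gs x + Gs x * Gd x) + (0 * (Hs x * Ks x) + 2 * (Hd x * Ks x + Hs x * Kd x)))))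
      - (0 * (fps_X * Gs x) + 8 * (0 * Gs x + fps_X * Gd x))) = 0"
  proof -
    have "4 * (fps_X^2 * (((2 * fps_const (H 0 x)) * Ks x - (2 * fps_const (K 0 x)) * Hs x) * Gs x + Gs x * ((2 * fps_const (H 0 x)) * Ks x - (2 * fps_const (K 0 x)) * Hs x)
        + 2 * (Hd x * Ks x + Hs x * Kd x))) - 8 * (fps_X * ((2 * fps_const (H 0 x)) * Ks x - (2 * fps_const (K 0 x)) * Hs x)) = 0"
      by (rule Fcons_alg[OF XHd XKd])
    then show ?thesis unfolding Gd_def sqrt2_qt sqrt2_rt by (simp add: algebra_simps)
  qed
  ultimately show ?thesis unfolding Fs_fun by simp
qed

end

lemma conv_split: "(\<Sum>i=0..Suc m. (f i :: real) * g (Suc m - i)) = f 0 * g (Suc m) + (\<Sum>i=1..m. f i * g (Suc m - i)) + f (Suc m) * g 0"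
proof -
  have "(\<Sum>i=0..Suc m. f i * g (Suc m - i)) = f 0 * g (Suc m) + (\<Sum>i=Suc 0..Suc m. f i * g (Suc m - i))"
    by (subst sum.atLeast_Suc_atMost) auto
  also have "(\<Sum>i=Suc 0..Suc m. f i * g (Suc m - i)) = (\<Sum>i=Suc 0..m. f i * g (Suc m - i)) + f (Suc m) * g 0"
    by (subst sum.cl_ivl_Suc) auto
  finally show ?thesis by simp
qed

lemma rec_a:
  fixes a b c :: "real fps"
  assumes "a $ 0 = -1" "b $ 0 = 0" "c $ 0 = 0" "a^2 + b * c = 1"
  shows "a $ Suc m = 1/2 * (\<Sum>i=1..m. a $ i * a $ (Suc m - i) + b $ i * c $ (Suc m - i))"
proof -
  have "(a^2 + b * c) $ Suc m = 0" using assms(4) by simp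
  then have "(\<Sum>i=0..Suc m. a $ i * a $ (Suc m - i)) + (\<Sum>i=0..Suc m. b $ i * c $ (Suc m - i)) = 0"
    by (simp add: power2_eq_square fps_mult_nth)
  then have "- 2 * a $ Suc m + (\<Sum>i=1..m. a $ i * a $ (Suc m - i)) + (\<Sum>i=1..m. b $ i * c $ (Suc m - i)) = 0"
    unfolding conv_split using assms(1-3) by simp
  then show ?thesis by (simp add: sum.distrib)
qed

lemma C_alg:
  fixes X G K I Kd d s h :: "real fps"
  assumes "X*Kd = (2*d) * (X*G) + 2*(K - d)" "h * 2 = 1"
  shows "X * (s * (I * K)) = X * (h * (X * (s * (I * Kd))) - (s*d) * (- I + X * (I * G)))"
  using assms by algebra

context sol
begin

lemma fder_I: assumes x: "x \<in> J" shows "fder Iser 0 x"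
  unfolding fder_def
proof
  fix m
  have eq: "(\<lambda>z. Iser z $ m) = (\<lambda>z. if m = 0 then 1 else (\<Sum>n=1..m. dn n * (Fs z ^ n) $ m))"
    by (simp add: Iser_def compose_coeff Fs0)
  have p: "((\<lambda>z. (Fs z ^ n) $ m) has_real_derivative 0) (at x)" for n
    using fder_power[OF fder_F[OF x], of n] unfolding fder_def by simp
  show "((\<lambda>z. Iser z $ m) has_real_derivative 0 $ m) (at x)"
  proof (cases "m = 0")
    case True then show ?thesis unfolding eq by simp
  next
    case False
    have "((\<lambda>z. \<Sum>n=1..m. dn n * (Fs z ^ n) $ m) has_real_derivative (\<Sum>n=1..m. dn n * 0)) (at x)"
      by (intro DERIV_sum DERIV_cmult p)
    then show ?thesis unfolding eq using False by simp
  qed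
qed

definition As :: "real \<Rightarrow> real fps" where "As z = - Iser z + fps_X * (Iser z * Gs z)"
definition Bs :: "real \<Rightarrow> real fps" where "Bs z = fps_X * (fps_const (sqrt 2) * (Iser z * Hs z))"
definition Cs :: "real \<Rightarrow> real fps" where "Cs z = fps_X * (fps_const (sqrt 2) * (Iser z * Ks z))"
definition Bd :: "real \<Rightarrow> real fps" where "Bd z = fps_X * (fps_const (sqrt 2) * (Iser z * Hd z))"
definition Cd :: "real \<Rightarrow> real fps" where "Cd z = fps_X * (fps_const (sqrt 2) * (Iser z * Kd z))"

lemma fder_B: assumes x: "x \<in> J" shows "fder Bs (Bd x) x"
proof -
  have "fder (\<lambda>z. fps_X * (fps_const (sqrt 2) * (Iser z * Hs z)))
     (0 * (fps_const (sqrt 2) * (Iser x * Hs x)) + fps_X * (0 * (Iser x * Hs x) + fps_const (sqrt 2) * (0 * Hs x + Iser x * Hd x))) x"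
    by (intro fder_mult fder_const fder_I[OF x] fder_H[OF x])
  then show ?thesis by (simp add: Bs_def[abs_def] Bd_def)
qed

lemma fder_C: assumes x: "x \<in> J" shows "fder Cs (Cd x) x"
proof -
  have "fder (\<lambda>z. fps_X * (fps_const (sqrt 2) * (Iser z * Ks z)))
     (0 * (fps_const (sqrt 2) * (Iser x * Ks x)) + fps_X * (0 * (Iser x * Ks x) + fps_const (sqrt 2) * (0 * Ks x + Iser x * Kd x))) x"
    by (intro fder_mult fder_const fder_I[OF x] fder_K[OF x])
  then show ?thesis by (simp add: Cs_def[abs_def] Cd_def)
qed

lemma half2: "fps_const (1/2) * 2 = (1::real fps)"
  by (simp add: numeral_fps_const)

lemma B_ident: "Bs x = fps_X * (fps_const (-1/2) * Bd x - fps_const (qt x) * As x)"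
proof -
  have e1: "fps_const (-1/2) = - fps_const (1/2::real)" by simp
  have e2: "fps_const (qt x) = fps_const (sqrt 2) * fps_const (H 0 x)" by (simp add: qt_H)
  show ?thesis unfolding Bs_def Bd_def As_def e1 e2
    by (rule B_alg[OF XHd half2])
qed

lemma C_ident: "Cs x = fps_X * (fps_const (1/2) * Cd x - fps_const (rt x) * As x)"
proof -
  have e2: "fps_const (rt x) = fps_const (sqrt 2) * fps_const (K 0 x)" by (simp add: rt_K)
  show ?thesis unfolding Cs_def Cd_def As_def e2
    by (rule C_alg[OF XKd half2])
qed

lemma A_ident: "As x ^ 2 + Bs x * Cs x = 1"
proof -
  have "(Ef oo Fs x) ^ 2 * (1 + fps_const (1/4) * Fs x) = 1" by (rule I_sq[OF Fs0])
  moreover have "fps_const (1/4) * 4 = (1::real fps)" by (simp add: numeral_fps_const)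
  moreover have "fps_const (sqrt 2) * fps_const (sqrt 2) = (2::real fps)" by (simp add: numeral_fps_const)
  ultimately show ?thesis unfolding As_def Bs_def Cs_def Iser_def
    by (intro A_alg[where F="Fs x" and q="fps_const (1/4)"]) (simp_all add: Fs_def)
qed

lemma Iser0: "Iser x $ 0 = 1" by (simp add: Iser_def Ef_def)

lemma As_0: "As x $ 0 = -1" by (simp add: As_def Iser0)
lemma Bs_0: "Bs x $ 0 = 0" by (simp add: Bs_def)
lemma Cs_0: "Cs x $ 0 = 0" by (simp add: Cs_def)

lemma As_Suc: "As x $ Suc m = (\<Sum>i=0..m. Iser x $ i * G (m - i) x) - Iser x $ Suc m"
  unfolding As_def fps_add_nth fps_neg_nth fps_X_mult_nth by (simp add: fps_mult_nth Gs_def)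
lemma Bs_Suc: "Bs x $ Suc m = sqrt 2 * (\<Sum>i=0..m. Iser x $ i * H (m - i) x)"
  unfolding Bs_def fps_X_mult_nth fps_mult_left_const_nth by (simp add: fps_mult_nth Hs_def)
lemma Cs_Suc: "Cs x $ Suc m = sqrt 2 * (\<Sum>i=0..m. Iser x $ i * K (m - i) x)"
  unfolding Cs_def fps_X_mult_nth fps_mult_left_const_nth by (simp add: fps_mult_nth Ks_def)

end

context sol
begin

lemma main_ind: "\<forall>y\<in>J. along (a_dp m) qt rt y = As y $ m \<and> along (b_dp m) qt rt y = Bs y $ m \<and> along (c_dp m) qt rt y = Cs y $ m"
proof (induction m rule: less_induct)
  case (less m)
  show ?case
  proof (cases m)
    case 0
    then show ?thesis by (simp add: abc_0 along_def As_0 Bs_0 Cs_0)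
  next
    case (Suc k)
    have IH: "along (a_dp j) qt rt z = As z $ j" "along (b_dp j) qt rt z = Bs z $ j" "along (c_dp j) qt rt z = Cs z $ j"
      if "j \<le> k" "z \<in> J" for j z
      using less[of j] that Suc by auto
    show ?thesis
    proof
      fix y assume y: "y \<in> J"
      have Pk: "Pabc k" "Pabc (Suc k)" by (rule Pabc_all)+
      have dB: "diffpoly (b_dp k)" and dC: "diffpoly (c_dp k)" using Pk(1) by (auto simp: Pabc_def)
      have LSy: "LS qt y" "LS rt y" using LS_qt LS_rt y by auto
      have DxB: "along (Dx (b_dp k)) qt rt y = Bd y $ k"
      proof -
        have "(along (b_dp k) qt rt has_real_derivative along (Dx (b_dp k)) qt rt y) (at y)"
          using Dx_char[OF dB] LSy by blast
        moreover have "(along (b_dp k) qt rt has_real_derivative Bd y $ k) (at y)"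
        proof (rule has_field_derivative_transform_within_open[OF _ J y])
          show "((\<lambda>z. Bs z $ k) has_real_derivative Bd y $ k) (at y)" using fder_B[OF y] by (simp add: fder_def)
          show "Bs z $ k = along (b_dp k) qt rt z" if "z \<in> J" for z using IH(2)[OF le_refl that] by simp
        qed
        ultimately show ?thesis by (rule DERIV_unique)
      qed
      have DxC: "along (Dx (c_dp k)) qt rt y = Cd y $ k"
      proof -
        have "(along (c_dp k) qt rt has_real_derivative along (Dx (c_dp k)) qt rt y) (at y)"
          using Dx_char[OF dC] LSy by blast
        moreover have "(along (c_dp k) qt rt has_real_derivative Cd y $ k) (at y)"
        proof (rule has_field_derivative_transform_within_open[OF _ J y])
          show "((\<lambda>z. Cs z $ k) has_real_derivative Cd y $ k) (at y)" using fder_C[OF y] by (simp add: fder_def)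
          show "Cs z $ k = along (c_dp k) qt rt z" if "z \<in> J" for z using IH(3)[OF le_refl that] by simp
        qed
        ultimately show ?thesis by (rule DERIV_unique)
      qed
      have b: "along (b_dp (Suc k)) qt rt y = Bs y $ Suc k"
      proof -
        have "along (b_dp (Suc k)) qt rt y = -(1/2) * along (Dx (b_dp k)) qt rt y - qt y * along (a_dp k) qt rt y"
          by (simp add: abc_Suc along_def jet_def)
        also have "\<dots> = -(1/2) * Bd y $ k - qt y * As y $ k" using DxB IH(1)[OF le_refl y] by simp
        also have "\<dots> = Bs y $ Suc k" by (subst B_ident) simp
        finally show ?thesis .
      qed
      have c: "along (c_dp (Suc k)) qt rt y = Cs y $ Suc k"
      proof -
        have "along (c_dp (Suc k)) qt rt y = (1/2) * along (Dx (c_dp k)) qt rt y - rt y * along (a_dp k) qt rt y"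
          by (simp add: abc_Suc along_def jet_def)
        also have "\<dots> = (1/2) * Cd y $ k - rt y * As y $ k" using DxC IH(1)[OF le_refl y] by simp
        also have "\<dots> = Cs y $ Suc k" by (subst C_ident) simp
        finally show ?thesis .
      qed
      have a: "along (a_dp (Suc k)) qt rt y = As y $ Suc k"
      proof -
        have aeq: "a_dp (Suc k) = (\<lambda>Q R. 1/2 * (\<Sum>i=1..Suc k-1. a_dp i Q R * a_dp (Suc k-i) Q R + b_dp i Q R * c_dp (Suc k-i) Q R))"
          using Pk(2) by (simp add: Pabc_def)
        have "along (a_dp (Suc k)) qt rt y = 1/2 * (\<Sum>i=1..k. along (a_dp i) qt rt y * along (a_dp (Suc k - i)) qt rt y
            + along (b_dp i) qt rt y * along (c_dp (Suc k - i)) qt rt y)"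
          by (subst aeq) (simp add: along_def)
        also have "\<dots> = 1/2 * (\<Sum>i=1..k. As y $ i * As y $ (Suc k - i) + Bs y $ i * Cs y $ (Suc k - i))"
          using IH y by (intro arg_cong2[where f="(*)"] refl sum.cong) auto
        also have "\<dots> = As y $ Suc k" by (rule rec_a[OF As_0 Bs_0 Cs_0 A_ident, symmetric])
        finally show ?thesis .
      qed
      show "along (a_dp m) qt rt y = As y $ m \<and> along (b_dp m) qt rt y = Bs y $ m \<and> along (c_dp m) qt rt y = Cs y $ m"
        using a b c Suc by simp
    qed
  qed
qed

lemma final:
  shows "\<forall>m x. x \<in> J \<longrightarrow>
    (let P = (\<lambda>i j. \<phi> i j x); Q = (\<lambda>i j. \<psi> i j x);
         I = Im lam mu N P Q; g = ip lam mu N P Q in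
      along (a_dp (Suc m)) qt rt x
        = (\<Sum>i=0..m. I i * (g (m-i) 1 1 - g (m-i) 3 3)) - I (Suc m)
    \<and> along (b_dp (Suc m)) qt rt x
        = sqrt 2 * (\<Sum>i=0..m. I i * (g (m-i) 1 2 + g (m-i) 2 3))
    \<and> along (c_dp (Suc m)) qt rt x
        = sqrt 2 * (\<Sum>i=0..m. I i * (g (m-i) 2 1 + g (m-i) 3 2)))"
proof (intro allI impI)
  fix m x assume x: "x \<in> J"
  have "along (a_dp (Suc m)) qt rt x = As x $ Suc m \<and> along (b_dp (Suc m)) qt rt x = Bs x $ Suc m \<and> along (c_dp (Suc m)) qt rt x = Cs x $ Suc m"
    using main_ind[of "Suc m"] x by blast
  then show "let P = (\<lambda>i j. \<phi> i j x); Q = (\<lambda>i j. \<psi> i j x);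
         I = Im lam mu N P Q; g = ip lam mu N P Q in
      along (a_dp (Suc m)) qt rt x
        = (\<Sum>i=0..m. I i * (g (m-i) 1 1 - g (m-i) 3 3)) - I (Suc m)
    \<and> along (b_dp (Suc m)) qt rt x
        = sqrt 2 * (\<Sum>i=0..m. I i * (g (m-i) 1 2 + g (m-i) 2 3))
    \<and> along (c_dp (Suc m)) qt rt x
        = sqrt 2 * (\<Sum>i=0..m. I i * (g (m-i) 2 1 + g (m-i) 3 2))"
    by (simp add: Let_def Im_eq As_Suc Bs_Suc Cs_Suc G_def H_def K_def)
qed

end

theorem theorem4p1:
  fixes N :: nat and lam mu :: "nat \<Rightarrow> real"
    and \<phi> \<psi> :: "nat \<Rightarrow> nat \<Rightarrow> real \<Rightarrow> real"
    and J :: "real set"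
    and qt rt :: "real \<Rightarrow> real"
  assumes N: "N \<ge> 1"
    and distinct: "\<And>j k. j \<in> {1..N} \<Longrightarrow> k \<in> {1..N} \<Longrightarrow> j \<noteq> k \<Longrightarrow> lam j \<noteq> lam k"
    and nonzero: "\<And>j. j \<in> {1..N} \<Longrightarrow> mu j \<noteq> 0"
    and J: "open J"
    and qt: "\<And>x. qt x = sqrt 2 * (ip lam mu N (\<lambda>i j. \<phi> i j x) (\<lambda>i j. \<psi> i j x) 0 1 2
                                  + ip lam mu N (\<lambda>i j. \<phi> i j x) (\<lambda>i j. \<psi> i j x) 0 2 3)"
    and rt: "\<And>x. rt x = sqrt 2 * (ip lam mu N (\<lambda>i j. \<phi> i j x) (\<lambda>i j. \<psi> i j x) 0 2 1
                                  + ip lam mu N (\<lambda>i j. \<phi> i j x) (\<lambda>i j. \<psi> i j x) 0 3 2)"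
    and ode_phi1: "\<And>j x. j \<in> {1..N} \<Longrightarrow> x \<in> J \<Longrightarrow>
       (\<phi> 1 j has_real_derivative (-2 * lam j * \<phi> 1 j x + sqrt 2 * qt x * \<phi> 2 j x)) (at x)"
    and ode_phi2: "\<And>j x. j \<in> {1..N} \<Longrightarrow> x \<in> J \<Longrightarrow>
       (\<phi> 2 j has_real_derivative (sqrt 2 * rt x * \<phi> 1 j x + sqrt 2 * qt x * \<phi> 3 j x)) (at x)"
    and ode_phi3: "\<And>j x. j \<in> {1..N} \<Longrightarrow> x \<in> J \<Longrightarrow>
       (\<phi> 3 j has_real_derivative (sqrt 2 * rt x * \<phi> 2 j x + 2 * lam j * \<phi> 3 j x)) (at x)"
    and ode_psi1: "\<And>j x. j \<in> {1..N} \<Longrightarrow> x \<in> J \<Longrightarrow>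
       (\<psi> 1 j has_real_derivative (2 * lam j * \<psi> 1 j x - sqrt 2 * rt x * \<psi> 2 j x)) (at x)"
    and ode_psi2: "\<And>j x. j \<in> {1..N} \<Longrightarrow> x \<in> J \<Longrightarrow>
       (\<psi> 2 j has_real_derivative (- sqrt 2 * qt x * \<psi> 1 j x - sqrt 2 * rt x * \<psi> 3 j x)) (at x)"
    and ode_psi3: "\<And>j x. j \<in> {1..N} \<Longrightarrow> x \<in> J \<Longrightarrow>
       (\<psi> 3 j has_real_derivative (- sqrt 2 * qt x * \<psi> 2 j x - 2 * lam j * \<psi> 3 j x)) (at x)"
  shows "\<forall>m x. x \<in> J \<longrightarrow>
    (let P = (\<lambda>i j. \<phi> i j x); Q = (\<lambda>i j. \<psi> i j x);
         I = Im lam mu N P Q; g = ip lam mu N P Q in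
      along (a_dp (Suc m)) qt rt x
        = (\<Sum>i=0..m. I i * (g (m-i) 1 1 - g (m-i) 3 3)) - I (Suc m)
    \<and> along (b_dp (Suc m)) qt rt x
        = sqrt 2 * (\<Sum>i=0..m. I i * (g (m-i) 1 2 + g (m-i) 2 3))
    \<and> along (c_dp (Suc m)) qt rt x
        = sqrt 2 * (\<Sum>i=0..m. I i * (g (m-i) 2 1 + g (m-i) 3 2)))"
proof -
  have "sol N lam mu \<phi> \<psi> J qt rt"
    using J qt rt ode_phi1 ode_phi2 ode_phi3 ode_psi1 ode_psi2 ode_psi3 by (rule sol.intro)
  then show ?thesis by (rule sol.final)
qed

end
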